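(* Let $k,\ell\in\mathbb{N}$, $\varepsilon>0$, and let $V$ be a finite set with $n=|V|\ge 2k\ge 2\ell$. If $f\colon\binom{V}{k}\to\mathbb{R}$ satisfies $\max_{\ell\le r\le k}W^r(f)\le\varepsilon$, then there exists $\tilde f\colon\binom{V}{k}\to\mathbb{R}$ such that: (i) for all but at most $5^{k/2}\varepsilon^{1/2}\binom{n}{k}$ sets $R\in\binom{V}{k}$, $|f(R)-\tilde f(R)|\le\varepsilon^{1/2}$; (ii) $W^k(\tilde f)=\cdots=W^{\ell}(\tilde f)=0$.
   Context: An $s$-permutation of $V$ is a sequence of $s$ distinct elements of $V$. For $k,r\in\mathbb{N}$, a finite set $V$ with $|V|\ge 2k\ge 2r$ and $f\colon\binom{V}{k}\to\mathbb{R}$, the level-$r$ weight of $f$ is \[ W^r(f)=\left(\mathbb{E}_{(a_1,b_1,\ldots,a_r,b_r)}\Big(\mathbb{E}_{R}\,(-1)^{|R\cap\{b_1,\ldots,b_r\}|}f(R)\Big)^2\right)^{1/2}, \] where $(a_1,b_1,\ldots,a_r,b_r)$ is a uniformly random $2r$-permutation of $V$, and, given it, $R$ is a uniformly random $k$-subset of $V$ with $|R\cap\{a_i,b_i\}|=1$ for each $i\in[r]$. *)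

theory Defs
  imports Complex_Main
begin

definition avg :: "'b set \<Rightarrow> ('b \<Rightarrow> real) \<Rightarrow> real" where
  "avg S g = (\<Sum>x\<in>S. g x) / real (card S)"

definition ksubsets :: "'a set \<Rightarrow> nat \<Rightarrow> 'a set set" where
  "ksubsets V k = {R. R \<subseteq> V \<and> card R = k}"

definition sperms :: "'a set \<Rightarrow> nat \<Rightarrow> 'a list set" where
  "sperms V s = {xs. length xs = s \<and> distinct xs \<and> set xs \<subseteq> V}"

text \<open>For a 2r-permutation xs = (a_1,b_1,...,a_r,b_r): a_i = xs!(2i), b_i = xs!(2i+1)
  (0-based i < r).\<close>
definition bset :: "'a list \<Rightarrow> nat \<Rightarrow> 'a set" where
  "bset xs r = {xs ! (2*i+1) | i. i < r}"

definition admissible :: "'a set \<Rightarrow> nat \<Rightarrow> nat \<Rightarrow> 'a list \<Rightarrow> 'a set set" where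
  "admissible V k r xs =
     {R \<in> ksubsets V k. \<forall>i<r. card (R \<inter> {xs ! (2*i), xs ! (2*i+1)}) = 1}"

definition level_weight :: "'a set \<Rightarrow> nat \<Rightarrow> nat \<Rightarrow> ('a set \<Rightarrow> real) \<Rightarrow> real" where
  "level_weight V k r f =
     sqrt (avg (sperms V (2*r))
       (\<lambda>xs. (avg (admissible V k r xs)
               (\<lambda>R. (-1) ^ card (R \<inter> bset xs r) * f R))\<^sup>2))"

end

theory Submission
  imports Defs "HOL-Analysis.Convex"
begin

definition Dv :: "'a set \<Rightarrow> nat \<Rightarrow> nat \<Rightarrow> 'a list \<Rightarrow> ('a set \<Rightarrow> real) \<Rightarrow> real" where
  "Dv V k r xs f = avg (admissible V k r xs) (\<lambda>R. (-1) ^ card (R \<inter> bset xs r) * f R)"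

definition W2 :: "'a set \<Rightarrow> nat \<Rightarrow> nat \<Rightarrow> ('a set \<Rightarrow> real) \<Rightarrow> real" where
  "W2 V k r f = avg (sperms V (2*r)) (\<lambda>xs. (Dv V k r xs f)\<^sup>2)"

lemma level_weight_W2: "level_weight V k r f = sqrt (W2 V k r f)"
  by (simp add: level_weight_def W2_def Dv_def)

definition ip :: "'a set \<Rightarrow> nat \<Rightarrow> ('a set \<Rightarrow> real) \<Rightarrow> ('a set \<Rightarrow> real) \<Rightarrow> real" where
  "ip V k x y = (\<Sum>R\<in>ksubsets V k. x R * y R)"

definition orth :: "'a set \<Rightarrow> nat \<Rightarrow> nat \<Rightarrow> ('a set \<Rightarrow> real) \<Rightarrow> bool" where
  "orth V k j h \<longleftrightarrow> (\<forall>T. T \<subseteq> V \<and> card T < j \<longrightarrow> (\<Sum>R\<in>{R\<in>ksubsets V k. T \<subseteq> R}. h R) = 0)"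

definition inU :: "'a set \<Rightarrow> nat \<Rightarrow> nat \<Rightarrow> ('a set \<Rightarrow> real) \<Rightarrow> bool" where
  "inU V k j g \<longleftrightarrow> (\<forall>x. orth V k j x \<longrightarrow> ip V k x g = 0)"

definition delta :: "'a \<Rightarrow> 'a \<Rightarrow> ('a set \<Rightarrow> real) \<Rightarrow> 'a set \<Rightarrow> real" where
  "delta a b f = (\<lambda>S. (f (insert a S) - f (insert b S)) / 2)"

lemma finite_ksubsets: "finite V \<Longrightarrow> finite (ksubsets V k)"
  unfolding ksubsets_def by (rule finite_subset[of _ "Pow V"]) auto

lemma card_ksubsets: "finite V \<Longrightarrow> card (ksubsets V k) = card V choose k"
  unfolding ksubsets_def by (simp add: n_subsets)

lemma proj_exists:
  fixes X :: "'b set" and B :: "('b \<Rightarrow> real) set"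
  assumes "finite B"
  shows "\<exists>g. (\<forall>x. (\<forall>b\<in>B. (\<Sum>R\<in>X. x R * b R) = 0) \<longrightarrow> (\<Sum>R\<in>X. x R * g R) = 0)
           \<and> (\<forall>b\<in>B. (\<Sum>R\<in>X. (f R - g R) * b R) = 0)"
  using assms
proof (induction B arbitrary: f)
  case empty
  show ?case by (rule exI[of _ "\<lambda>_. 0"]) simp
next
  case (insert u B)
  define sp where "sp = (\<lambda>x y. (\<Sum>R\<in>X. x R * (y R::real)))"
  have sp_sub: "sp x (\<lambda>R. y R - z R) = sp x y - sp x z" for x y z
    by (simp add: sp_def algebra_simps sum_subtractf)
  have sp_sub1: "sp (\<lambda>R. y R - z R) x = sp y x - sp z x" for x y z
    by (simp add: sp_def algebra_simps sum_subtractf)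
  have sp_add: "sp x (\<lambda>R. y R + c * z R) = sp x y + c * sp x z" for x y z c
    by (simp add: sp_def algebra_simps sum.distrib sum_distrib_left)
  have sp_add1: "sp (\<lambda>R. y R - (z R + c * w R)) x = sp y x - sp z x - c * sp w x" for x y z w c
    by (simp add: sp_def algebra_simps sum.distrib sum_distrib_left sum_subtractf)
  have sp_comm: "sp x y = sp y x" for x y by (simp add: sp_def mult.commute)
  have sp_plus: "sp x (\<lambda>R. y R + z R) = sp x y + sp x z" for x y z
    by (simp add: sp_def algebra_simps sum.distrib)
  obtain g0 where g0: "\<forall>x. (\<forall>b\<in>B. sp x b = 0) \<longrightarrow> sp x g0 = 0" "\<forall>b\<in>B. sp (\<lambda>R. f R - g0 R) b = 0"
    using insert.IH[of f] unfolding sp_def by blast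
  obtain g1 where g1: "\<forall>x. (\<forall>b\<in>B. sp x b = 0) \<longrightarrow> sp x g1 = 0" "\<forall>b\<in>B. sp (\<lambda>R. u R - g1 R) b = 0"
    using insert.IH[of u] unfolding sp_def by blast
  define u' where "u' = (\<lambda>R. u R - g1 R)"
  have uB: "\<forall>b\<in>B. sp u' b = 0" using g1(2) by (simp add: u'_def)
  have u_eq: "u = (\<lambda>R. u' R + g1 R)" by (simp add: u'_def)
  show ?case
  proof (cases "sp u' u' = 0")
    case True
    have "sp x u' = 0" for x
    proof -
      have "(\<Sum>R\<in>X. (u' R)\<^sup>2) = 0" using True by (simp add: sp_def power2_eq_square)
      then have "finite X \<Longrightarrow> \<forall>R\<in>X. u' R = 0" by (simp add: sum_nonneg_eq_0_iff)
      then show ?thesis by (cases "finite X") (auto simp: sp_def)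
    qed
    moreover have "sp (\<lambda>R. f R - g0 R) g1 = 0" using g1(1) g0(2) by blast
    ultimately have "sp (\<lambda>R. f R - g0 R) u = 0"
      unfolding u_eq sp_plus by simp
    then show ?thesis using g0 unfolding sp_def by (intro exI[of _ g0]) auto
  next
    case False
    define c where "c = sp (\<lambda>R. f R - g0 R) u' / sp u' u'"
    define g where "g = (\<lambda>R. g0 R + c * u' R)"
    have Q: "sp x g = 0" if "\<forall>b\<in>insert u B. sp x b = 0" for x
    proof -
      have "sp x g0 = 0" using g0(1) that by blast
      moreover have "sp x g1 = 0" using g1(1) that by blast
      moreover have "sp x u = 0" using that by blast
      ultimately show ?thesis unfolding g_def u'_def by (simp add: sp_add sp_sub)
    qed
    have B1: "sp (\<lambda>R. f R - g R) b = 0" if "b \<in> B" for b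
      unfolding g_def sp_add1 using g0(2) uB that sp_sub1 by simp
    have B2: "sp (\<lambda>R. f R - g R) g1 = 0" using g1(1) B1 by blast
    have B3: "sp (\<lambda>R. f R - g R) u' = 0"
      unfolding g_def sp_add1 c_def using False by (simp add: sp_sub1)
    have "sp (\<lambda>R. f R - g R) u = 0"
      unfolding u_eq sp_plus using B2 B3 by simp
    then show ?thesis using Q B1 unfolding sp_def by (intro exI[of _ g]) auto
  qed
qed

lemma finite_ksubsets_elem: "finite V \<Longrightarrow> R \<in> ksubsets V k \<Longrightarrow> finite R"
  unfolding ksubsets_def using finite_subset by blast

lemma ex_insert_of_card:
  assumes "finite R" "S \<subseteq> R" "card R = Suc (card S)"
  shows "\<exists>x. x \<notin> S \<and> R = insert x S"
proof -
  have "card (R - S) = 1" using assms by (simp add: card_Diff_subset finite_subset)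
  then obtain x where x: "R - S = {x}" by (auto simp: card_Suc_eq)
  then show ?thesis using assms(2) by (intro exI[of _ x]) auto
qed

lemma flag:
  assumes "finite V"
  shows "(\<Sum>R\<in>ksubsets V (Suc j). \<Sum>x\<in>R. F R x) = (\<Sum>A\<in>ksubsets V j. \<Sum>x\<in>V - A. F (insert x A) x)"
proof -
  have "(\<Sum>R\<in>ksubsets V (Suc j). \<Sum>x\<in>R. F R x) = (\<Sum>(R,x)\<in>Sigma (ksubsets V (Suc j)) (\<lambda>R. R). F R x)"
    by (rule sum.Sigma) (use assms finite_ksubsets finite_ksubsets_elem in auto)
  also have "\<dots> = (\<Sum>(A,x)\<in>Sigma (ksubsets V j) (\<lambda>A. V - A). F (insert x A) x)"
  proof (rule sum.reindex_bij_witness[where i="\<lambda>(A,x). (insert x A, x)" and j="\<lambda>(R,x). (R - {x}, x)"])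
    fix p assume p: "p \<in> Sigma (ksubsets V (Suc j)) (\<lambda>R. R)"
    then obtain R x where "p = (R,x)" "R \<subseteq> V" "card R = Suc j" "x \<in> R" by (auto simp: ksubsets_def)
    moreover have "finite R" using \<open>R \<subseteq> V\<close> assms finite_subset by blast
    ultimately show "(case (case p of (R, x) \<Rightarrow> (R - {x}, x)) of (A, x) \<Rightarrow> (insert x A, x)) = p"
      and "(case p of (R, x) \<Rightarrow> (R - {x}, x)) \<in> Sigma (ksubsets V j) ((-) V)"
      and "(case (case p of (R, x) \<Rightarrow> (R - {x}, x)) of (A, x) \<Rightarrow> F (insert x A) x) = (case p of (R, x) \<Rightarrow> F R x)"
      by (auto simp: ksubsets_def insert_absorb)
  next
    fix p assume p: "p \<in> Sigma (ksubsets V j) (\<lambda>A. V - A)"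
    then obtain A x where "p = (A,x)" "A \<subseteq> V" "card A = j" "x \<in> V" "x \<notin> A" by (auto simp: ksubsets_def)
    moreover have "finite A" using \<open>A \<subseteq> V\<close> assms finite_subset by blast
    ultimately show "(case (case p of (A, x) \<Rightarrow> (insert x A, x)) of (R, x) \<Rightarrow> (R - {x}, x)) = p"
      and "(case p of (A, x) \<Rightarrow> (insert x A, x)) \<in> Sigma (ksubsets V (Suc j)) (\<lambda>R. R)"
      by (auto simp: ksubsets_def)
  qed
  also have "\<dots> = (\<Sum>A\<in>ksubsets V j. \<Sum>x\<in>V - A. F (insert x A) x)"
    by (rule sum.Sigma[symmetric]) (use assms finite_ksubsets in auto)
  finally show ?thesis .
qed

lemma L_up:
  assumes "finite V" "S \<in> ksubsets V j"
  shows "(\<Sum>x\<in>V - S. F (insert x S)) = (\<Sum>R\<in>{R\<in>ksubsets V (Suc j). S \<subseteq> R}. F R)"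
proof -
  have S: "S \<subseteq> V" "card S = j" "finite S" using assms by (auto simp: ksubsets_def finite_subset)
  have inj: "inj_on (\<lambda>x. insert x S) (V - S)" by (rule inj_onI) blast
  have img: "(\<lambda>x. insert x S) ` (V - S) = {R\<in>ksubsets V (Suc j). S \<subseteq> R}"
  proof
    show "(\<lambda>x. insert x S) ` (V - S) \<subseteq> {R \<in> ksubsets V (Suc j). S \<subseteq> R}"
      using S by (auto simp: ksubsets_def)
    show "{R \<in> ksubsets V (Suc j). S \<subseteq> R} \<subseteq> (\<lambda>x. insert x S) ` (V - S)"
    proof
      fix R assume R: "R \<in> {R \<in> ksubsets V (Suc j). S \<subseteq> R}"
      then have "finite R" "S \<subseteq> R" "card R = Suc (card S)" "R \<subseteq> V"
        using S assms(1) finite_subset by (auto simp: ksubsets_def)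
      then obtain x where "x \<notin> S" "R = insert x S" using ex_insert_of_card by blast
      then show "R \<in> (\<lambda>x. insert x S) ` (V - S)" using \<open>R \<subseteq> V\<close> by auto
    qed
  qed
  show ?thesis using sum.reindex[OF inj, of F] img by simp
qed

lemma L_ins:
  assumes "finite V" "a \<in> V" "b \<in> V" "a \<noteq> b" "k \<ge> 1"
  shows "(\<Sum>S\<in>ksubsets (V - {a,b}) (k-1). F (insert a S)) = (\<Sum>R\<in>{R\<in>ksubsets V k. a \<in> R \<and> b \<notin> R}. F R)"
proof (rule sum.reindex_bij_witness[where i="\<lambda>R. R - {a}" and j="insert a"])
  fix S assume "S \<in> ksubsets (V - {a, b}) (k - 1)"
  then have S: "S \<subseteq> V - {a,b}" "card S = k - 1" "finite S" using assms(1) finite_subset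
    by (auto simp: ksubsets_def)
  moreover have "a \<notin> S" using S by auto
  ultimately show "insert a S - {a} = S" "insert a S \<in> {R \<in> ksubsets V k. a \<in> R \<and> b \<notin> R}"
    using assms by (auto simp: ksubsets_def)
next
  fix R assume "R \<in> {R \<in> ksubsets V k. a \<in> R \<and> b \<notin> R}"
  then have R: "R \<subseteq> V" "card R = k" "finite R" "a \<in> R" "b \<notin> R" using assms(1) finite_subset
    by (auto simp: ksubsets_def)
  then show "insert a (R - {a}) = R" "R - {a} \<in> ksubsets (V - {a, b}) (k - 1)"
    by (auto simp: ksubsets_def)
qed simp

definition pairs :: "'a set \<Rightarrow> ('a \<times> 'a) set" where
  "pairs V = {p \<in> V \<times> V. fst p \<noteq> snd p}"

lemma finite_pairs: "finite V \<Longrightarrow> finite (pairs V)"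
  unfolding pairs_def by auto

lemma L_pairs:
  assumes "finite V"
  shows "(\<Sum>p\<in>pairs V. \<Sum>S\<in>ksubsets (V - {fst p, snd p}) m. G (fst p) (snd p) S)
       = (\<Sum>S\<in>ksubsets V m. \<Sum>a\<in>V - S. \<Sum>b\<in>V - S - {a}. G a b S)"
proof -
  have "(\<Sum>p\<in>pairs V. \<Sum>S\<in>ksubsets (V - {fst p, snd p}) m. G (fst p) (snd p) S)
      = (\<Sum>(p,S)\<in>Sigma (pairs V) (\<lambda>p. ksubsets (V - {fst p, snd p}) m). G (fst p) (snd p) S)"
    by (rule sum.Sigma) (use assms finite_pairs in \<open>auto intro: finite_ksubsets\<close>)
  also have "\<dots> = (\<Sum>(S,p)\<in>Sigma (ksubsets V m) (\<lambda>S. Sigma (V - S) (\<lambda>a. V - S - {a})). G (fst p) (snd p) S)"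
    by (rule sum.reindex_bij_witness[where i="\<lambda>(S,p). (p,S)" and j="\<lambda>(p,S). (S,p)"])
       (auto simp: pairs_def ksubsets_def)
  also have "\<dots> = (\<Sum>S\<in>ksubsets V m. \<Sum>p\<in>Sigma (V - S) (\<lambda>a. V - S - {a}). G (fst p) (snd p) S)"
    by (rule sum.Sigma[symmetric]) (use assms finite_ksubsets in auto)
  also have "\<dots> = (\<Sum>S\<in>ksubsets V m. \<Sum>a\<in>V - S. \<Sum>b\<in>V - S - {a}. G a b S)"
    by (intro sum.cong refl, subst sum.Sigma) (use assms in \<open>auto simp: split_beta\<close>)
  finally show ?thesis .
qed

definition dn :: "'a set \<Rightarrow> ('a set \<Rightarrow> real) \<Rightarrow> 'a set \<Rightarrow> real" where
  "dn V \<phi> S = (\<Sum>x\<in>V - S. \<phi> (insert x S))"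

lemma sum_filter_real: "finite A \<Longrightarrow> (\<Sum>R\<in>A. if P R then (c::real) * g R else 0) = c * (\<Sum>R\<in>{R\<in>A. P R}. g R)"
proof -
  assume "finite A"
  then have "(\<Sum>R\<in>A. if P R then c * g R else 0) = (\<Sum>R\<in>{R\<in>A. P R}. c * g R)"
    using sum.inter_filter[of A "\<lambda>R. c * g R" P] by simp
  also have "\<dots> = c * (\<Sum>R\<in>{R\<in>A. P R}. g R)" by (simp add: sum_distrib_left)
  finally show ?thesis .
qed

lemma dn_orth:
  assumes "finite V" "orth V (Suc j) l \<phi>"
  shows "orth V j l (dn V \<phi>)"
  unfolding orth_def
proof (intro allI impI)
  fix T assume T: "T \<subseteq> V \<and> card T < l"
  have "(\<Sum>S\<in>{S\<in>ksubsets V j. T \<subseteq> S}. dn V \<phi> S)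
      = (\<Sum>S\<in>ksubsets V j. \<Sum>x\<in>V - S. if T \<subseteq> insert x S - {x} then \<phi> (insert x S) else 0)"
  proof -
    have "(\<Sum>S\<in>{S\<in>ksubsets V j. T \<subseteq> S}. dn V \<phi> S) = (\<Sum>S\<in>ksubsets V j. if T \<subseteq> S then dn V \<phi> S else 0)"
      by (rule sum.inter_filter) (simp add: assms(1) finite_ksubsets)
    also have "\<dots> = (\<Sum>S\<in>ksubsets V j. \<Sum>x\<in>V - S. if T \<subseteq> insert x S - {x} then \<phi> (insert x S) else 0)"
    proof (intro sum.cong refl)
      fix S assume "S \<in> ksubsets V j"
      have e: "x \<in> V - S \<Longrightarrow> insert x S - {x} = S" for x by auto
      show "(if T \<subseteq> S then dn V \<phi> S else 0) = (\<Sum>x\<in>V - S. if T \<subseteq> insert x S - {x} then \<phi> (insert x S) else 0)"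
      proof -
        have "(\<Sum>x\<in>V - S. if T \<subseteq> insert x S - {x} then \<phi> (insert x S) else 0)
            = (\<Sum>x\<in>V - S. if T \<subseteq> S then \<phi> (insert x S) else 0)"
          by (rule sum.cong[OF refl], simp only: e)
        then show ?thesis by (simp add: dn_def)
      qed
    qed
    finally show ?thesis .
  qed
  also have "\<dots> = (\<Sum>R\<in>ksubsets V (Suc j). \<Sum>x\<in>R. if T \<subseteq> R - {x} then \<phi> R else 0)"
    by (rule flag[OF assms(1), symmetric])
  also have "\<dots> = (\<Sum>R\<in>ksubsets V (Suc j). if T \<subseteq> R then real (Suc j - card T) * \<phi> R else 0)"
  proof (rule sum.cong[OF refl])
    fix R assume R: "R \<in> ksubsets V (Suc j)"
    then have fR: "finite R" "card R = Suc j" using assms(1) finite_subset by (auto simp: ksubsets_def)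
    have "(\<Sum>x\<in>R. if T \<subseteq> R - {x} then \<phi> R else 0) = (\<Sum>x\<in>{x\<in>R. T \<subseteq> R - {x}}. \<phi> R)"
      using fR by (simp add: sum.If_cases Int_def conj_commute)
    also have "\<dots> = real (card {x\<in>R. T \<subseteq> R - {x}}) * \<phi> R" by simp
    also have "\<dots> = (if T \<subseteq> R then real (Suc j - card T) * \<phi> R else 0)"
    proof (cases "T \<subseteq> R")
      case True
      then have "{x\<in>R. T \<subseteq> R - {x}} = R - T" by auto
      moreover have "finite T" using True fR(1) finite_subset by blast
      ultimately show ?thesis using True fR by (simp add: card_Diff_subset)
    next
      case False
      have e0: "{x\<in>R. T \<subseteq> R - {x}} = {}" using False by auto
      show ?thesis using False by (simp only: e0 card.empty if_False)
    qed
    finally show "(\<Sum>x\<in>R. if T \<subseteq> R - {x} then \<phi> R else 0) = (if T \<subseteq> R then real (Suc j - card T) * \<phi> R else 0)" .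
  qed
  also have "\<dots> = real (Suc j - card T) * (\<Sum>R\<in>{R\<in>ksubsets V (Suc j). T \<subseteq> R}. \<phi> R)"
    by (rule sum_filter_real) (use assms(1) finite_ksubsets in auto)
  also have "\<dots> = 0" using assms(2) T unfolding orth_def by simp
  finally show "(\<Sum>S\<in>{S\<in>ksubsets V j. T \<subseteq> S}. dn V \<phi> S) = 0" .
qed

definition upop :: "('a set \<Rightarrow> real) \<Rightarrow> 'a set \<Rightarrow> real" where
  "upop w R = (\<Sum>x\<in>R. w (R - {x}))"

lemma card_ksub: "R \<in> ksubsets V j \<Longrightarrow> card R = j" by (simp add: ksubsets_def)
lemma sub_ksub: "R \<in> ksubsets V j \<Longrightarrow> R \<subseteq> V" by (simp add: ksubsets_def)

lemma dn_UD:
  assumes "finite V"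
  shows "(\<Sum>R\<in>ksubsets V (Suc (Suc j)). (upop w R)\<^sup>2)
       = (\<Sum>S\<in>ksubsets V j. (dn V w S)\<^sup>2) + (real (card V) - 2 * real (Suc j)) * (\<Sum>A\<in>ksubsets V (Suc j). (w A)\<^sup>2)"
proof -
  let ?K = "ksubsets V (Suc j)"
  define X where "X = (\<Sum>A\<in>?K. \<Sum>x\<in>V - A. \<Sum>y\<in>A. w A * w (insert x (A - {y})))"
  have cardVA: "card (V - A) = card V - Suc j" if "A \<in> ?K" for A
  proof -
    have "A \<subseteq> V" "card A = Suc j" using that by (auto simp: ksubsets_def)
    moreover have "finite A" using \<open>A \<subseteq> V\<close> assms finite_subset by blast
    ultimately show ?thesis by (simp add: card_Diff_subset)
  qed
  have cardle: "A \<in> ?K \<Longrightarrow> Suc j \<le> card V" for A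
  proof -
    assume "A \<in> ?K"
    then have "A \<subseteq> V" "card A = Suc j" by (auto simp: ksubsets_def)
    then show ?thesis using assms card_mono by metis
  qed
  have L: "(\<Sum>R\<in>ksubsets V (Suc (Suc j)). (upop w R)\<^sup>2) = (\<Sum>A\<in>?K. (real (card V) - real (Suc j)) * (w A)\<^sup>2) + X"
  proof -
    have "(\<Sum>R\<in>ksubsets V (Suc (Suc j)). (upop w R)\<^sup>2)
        = (\<Sum>R\<in>ksubsets V (Suc (Suc j)). \<Sum>x\<in>R. \<Sum>y\<in>R. w (R - {x}) * w (R - {y}))"
      by (simp add: upop_def power2_eq_square sum_product)
    also have "\<dots> = (\<Sum>A\<in>?K. \<Sum>x\<in>V - A. \<Sum>y\<in>insert x A. w (insert x A - {x}) * w (insert x A - {y}))"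
      by (rule flag[OF assms])
    also have "\<dots> = (\<Sum>A\<in>?K. \<Sum>x\<in>V - A. (w A)\<^sup>2 + (\<Sum>y\<in>A. w A * w (insert x (A - {y}))))"
    proof (intro sum.cong refl)
      fix A x assume A: "A \<in> ?K" and x: "x \<in> V - A"
      have fA: "finite A" using A assms finite_subset by (auto simp: ksubsets_def)
      have e1: "insert x A - {x} = A" using x by auto
      have "(\<Sum>y\<in>insert x A. w (insert x A - {x}) * w (insert x A - {y}))
          = w A * w A + (\<Sum>y\<in>A. w A * w (insert x A - {y}))"
      proof -
        have xA: "x \<notin> A" using x by simp
        show ?thesis unfolding sum.insert[OF fA xA] e1 by simp
      qed
      also have "(\<Sum>y\<in>A. w A * w (insert x A - {y})) = (\<Sum>y\<in>A. w A * w (insert x (A - {y})))"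
      proof (rule sum.cong[OF refl])
        fix y assume "y \<in> A"
        then have "insert x A - {y} = insert x (A - {y})" using x by auto
        then show "w A * w (insert x A - {y}) = w A * w (insert x (A - {y}))" by simp
      qed
      finally show "(\<Sum>y\<in>insert x A. w (insert x A - {x}) * w (insert x A - {y}))
          = (w A)\<^sup>2 + (\<Sum>y\<in>A. w A * w (insert x (A - {y})))" by (simp add: power2_eq_square)
    qed
    also have "\<dots> = (\<Sum>A\<in>?K. real (card (V - A)) * (w A)\<^sup>2) + X"
      by (simp add: sum.distrib X_def)
    also have "\<dots> = (\<Sum>A\<in>?K. (real (card V) - real (Suc j)) * (w A)\<^sup>2) + X"
      by (intro arg_cong2[where f="(+)"] sum.cong refl) (simp add: cardVA cardle of_nat_diff)
    finally show ?thesis .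
  qed
  have R: "(\<Sum>S\<in>ksubsets V j. (dn V w S)\<^sup>2) = (\<Sum>A\<in>?K. real (Suc j) * (w A)\<^sup>2) + X"
  proof -
    have "(\<Sum>S\<in>ksubsets V j. (dn V w S)\<^sup>2)
        = (\<Sum>S\<in>ksubsets V j. \<Sum>z\<in>V - S. \<Sum>z'\<in>V - (insert z S - {z}). w (insert z S) * w (insert z' (insert z S - {z})))"
    proof (intro sum.cong refl)
      fix S z assume "S \<in> ksubsets V j"
      show "(dn V w S)\<^sup>2 = (\<Sum>z\<in>V - S. \<Sum>z'\<in>V - (insert z S - {z}). w (insert z S) * w (insert z' (insert z S - {z})))"
      proof -
        have "(dn V w S)\<^sup>2 = (\<Sum>z\<in>V - S. \<Sum>z'\<in>V - S. w (insert z S) * w (insert z' S))"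
          by (simp add: dn_def power2_eq_square sum_product)
        also have "\<dots> = (\<Sum>z\<in>V - S. \<Sum>z'\<in>V - (insert z S - {z}). w (insert z S) * w (insert z' (insert z S - {z})))"
        proof (rule sum.cong[OF refl])
          fix z assume "z \<in> V - S"
          then have "insert z S - {z} = S" by auto
          then show "(\<Sum>z'\<in>V - S. w (insert z S) * w (insert z' S)) = (\<Sum>z'\<in>V - (insert z S - {z}). w (insert z S) * w (insert z' (insert z S - {z})))"
            by simp
        qed
        finally show ?thesis .
      qed
    qed
    also have "\<dots> = (\<Sum>A\<in>?K. \<Sum>z\<in>A. \<Sum>z'\<in>V - (A - {z}). w A * w (insert z' (A - {z})))"
      by (rule flag[OF assms, symmetric])
    also have "\<dots> = (\<Sum>A\<in>?K. \<Sum>z\<in>A. (w A)\<^sup>2 + (\<Sum>z'\<in>V - A. w A * w (insert z' (A - {z}))))"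
    proof (intro sum.cong refl)
      fix A z assume A: "A \<in> ?K" and z: "z \<in> A"
      have "V - (A - {z}) = insert z (V - A)" using z A by (auto simp: ksubsets_def)
      moreover have "insert z (A - {z}) = A" using z by auto
      moreover have "finite (V - A)" using assms by simp
      moreover have "z \<notin> V - A" using z by simp
      ultimately show "(\<Sum>z'\<in>V - (A - {z}). w A * w (insert z' (A - {z}))) = (w A)\<^sup>2 + (\<Sum>z'\<in>V - A. w A * w (insert z' (A - {z})))"
        by (simp add: power2_eq_square)
    qed
    also have "\<dots> = (\<Sum>A\<in>?K. real (card A) * (w A)\<^sup>2) + (\<Sum>A\<in>?K. \<Sum>z\<in>A. \<Sum>z'\<in>V - A. w A * w (insert z' (A - {z})))"
      by (simp add: sum.distrib)
    also have "(\<Sum>A\<in>?K. \<Sum>z\<in>A. \<Sum>z'\<in>V - A. w A * w (insert z' (A - {z}))) = X"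
      unfolding X_def by (rule sum.cong[OF refl], rule sum.swap)
    also have "(\<Sum>A\<in>?K. real (card A) * (w A)\<^sup>2) = (\<Sum>A\<in>?K. real (Suc j) * (w A)\<^sup>2)"
      by (intro sum.cong refl) (simp add: ksubsets_def)
    finally show ?thesis .
  qed
  have "(\<Sum>A\<in>?K. (real (card V) - real (Suc j)) * (w A)\<^sup>2)
      = (\<Sum>A\<in>?K. real (Suc j) * (w A)\<^sup>2) + (real (card V) - 2 * real (Suc j)) * (\<Sum>A\<in>?K. (w A)\<^sup>2)"
    unfolding sum_distrib_left[symmetric] by (simp add: algebra_simps)
  then show ?thesis using L R by simp
qed

lemma down_bound:
  assumes "finite V" "1 \<le> l" "l \<le> j" "2*j \<le> card V" "orth V j l \<phi>"
  shows "(\<Sum>S\<in>ksubsets V (j-1). (dn V \<phi> S)\<^sup>2)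
     \<le> real (j - l) * (real (card V) - real j - real l + 1) * (\<Sum>R\<in>ksubsets V j. (\<phi> R)\<^sup>2)"
  using assms(3-5)
proof (induction j arbitrary: \<phi>)
  case 0 then show ?case using assms(2) by simp
next
  case (Suc j)
  show ?case
  proof (cases "l = Suc j")
    case True
    have "dn V \<phi> S = 0" if "S \<in> ksubsets V j" for S
    proof -
      have "dn V \<phi> S = (\<Sum>R\<in>{R\<in>ksubsets V (Suc j). S \<subseteq> R}. \<phi> R)"
        unfolding dn_def by (rule L_up[OF assms(1) that])
      also have "\<dots> = 0" using Suc.prems(3) that True unfolding orth_def by (auto simp: ksubsets_def)
      finally show ?thesis .
    qed
    then show ?thesis using True by simp
  next
    case False
    then have lj: "l \<le> j" using Suc.prems by simp
    define w where "w = dn V \<phi>"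
    have ow: "orth V j l w" unfolding w_def by (rule dn_orth[OF assms(1) Suc.prems(3)])
    have IH: "(\<Sum>S\<in>ksubsets V (j-1). (dn V w S)\<^sup>2)
        \<le> real (j - l) * (real (card V) - real j - real l + 1) * (\<Sum>R\<in>ksubsets V j. (w R)\<^sup>2)"
      using Suc.IH[OF lj _ ow] Suc.prems(2) by simp
    obtain j' where j': "j = Suc j'" using lj assms(2) by (cases j) auto
    have UD: "(\<Sum>R\<in>ksubsets V (Suc j). (upop w R)\<^sup>2)
        = (\<Sum>S\<in>ksubsets V (j-1). (dn V w S)\<^sup>2) + (real (card V) - 2 * real j) * (\<Sum>A\<in>ksubsets V j. (w A)\<^sup>2)"
      using dn_UD[OF assms(1), where j=j' and w=w] j' by simp
    have ww: "(\<Sum>A\<in>ksubsets V j. (w A)\<^sup>2) = (\<Sum>R\<in>ksubsets V (Suc j). \<phi> R * upop w R)"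
    proof -
      have "(\<Sum>A\<in>ksubsets V j. (w A)\<^sup>2) = (\<Sum>A\<in>ksubsets V j. \<Sum>x\<in>V - A. w (insert x A - {x}) * \<phi> (insert x A))"
      proof (rule sum.cong[OF refl])
        fix A assume "A \<in> ksubsets V j"
        have "(w A)\<^sup>2 = w A * (\<Sum>x\<in>V - A. \<phi> (insert x A))"
          by (simp add: power2_eq_square w_def dn_def)
        also have "\<dots> = (\<Sum>x\<in>V - A. w A * \<phi> (insert x A))"
          by (rule sum_distrib_left)
        also have "\<dots> = (\<Sum>x\<in>V - A. w (insert x A - {x}) * \<phi> (insert x A))"
        proof (rule sum.cong[OF refl])
          fix x assume "x \<in> V - A"
          then have "insert x A - {x} = A" by auto
          then show "w A * \<phi> (insert x A) = w (insert x A - {x}) * \<phi> (insert x A)" by simp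
        qed
        finally show "(w A)\<^sup>2 = (\<Sum>x\<in>V - A. w (insert x A - {x}) * \<phi> (insert x A))" .
      qed
      also have "\<dots> = (\<Sum>R\<in>ksubsets V (Suc j). \<Sum>x\<in>R. w (R - {x}) * \<phi> R)"
        by (rule flag[OF assms(1), symmetric])
      also have "\<dots> = (\<Sum>R\<in>ksubsets V (Suc j). \<phi> R * upop w R)"
        by (simp add: upop_def sum_distrib_left mult.commute)
      finally show ?thesis .
    qed
    define a where "a = (\<Sum>A\<in>ksubsets V j. (w A)\<^sup>2)"
    define b where "b = (\<Sum>R\<in>ksubsets V (Suc j). (\<phi> R)\<^sup>2)"
    define c where "c = real (j - l) * (real (card V) - real j - real l + 1)"
    have a0: "a \<ge> 0" unfolding a_def by (simp add: sum_nonneg)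
    have b0: "b \<ge> 0" unfolding b_def by (simp add: sum_nonneg)
    have "a\<^sup>2 \<le> b * (\<Sum>R\<in>ksubsets V (Suc j). (upop w R)\<^sup>2)"
      unfolding a_def ww b_def by (rule Cauchy_Schwarz_ineq_sum)
    also have "\<dots> \<le> b * (c * a + (real (card V) - 2 * real j) * a)"
      unfolding UD a_def[symmetric] using IH b0 unfolding c_def a_def by (intro mult_left_mono) auto
    finally have main: "a * a \<le> a * (b * (c + real (card V) - 2 * real j))"
      by (simp add: power2_eq_square algebra_simps)
    have key: "c + real (card V) - 2 * real j = real (Suc j - l) * (real (card V) - real (Suc j) - real l + 1)"
      unfolding c_def using lj by (simp add: of_nat_diff algebra_simps)
    have nn: "0 \<le> real (Suc j - l) * (real (card V) - real (Suc j) - real l + 1)"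
      using lj Suc.prems(2) by (intro mult_nonneg_nonneg) auto
    have "a \<le> real (Suc j - l) * (real (card V) - real (Suc j) - real l + 1) * b"
    proof (cases "a = 0")
      case True then show ?thesis using nn b0 by simp
    next
      case False
      then have "a > 0" using a0 by simp
      then have "a \<le> b * (c + real (card V) - 2 * real j)" using main by simp
      then show ?thesis unfolding key by (simp add: mult.commute)
    qed
    then show ?thesis unfolding a_def b_def w_def by simp
  qed
qed

lemma sq_diff_sum:
  fixes u :: "'b \<Rightarrow> real"
  assumes "finite X"
  shows "(\<Sum>a\<in>X. \<Sum>b\<in>X. (u a - u b)\<^sup>2) = 2 * real (card X) * (\<Sum>a\<in>X. (u a)\<^sup>2) - 2 * (\<Sum>a\<in>X. u a)\<^sup>2"
proof -
  have e1: "(\<Sum>a\<in>X. \<Sum>b\<in>X. (u a - u b)\<^sup>2) = (\<Sum>a\<in>X. \<Sum>b\<in>X. (u a)\<^sup>2) + (\<Sum>a\<in>X. \<Sum>b\<in>X. (u b)\<^sup>2) - 2 * (\<Sum>a\<in>X. \<Sum>b\<in>X. u a * u b)"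
    by (simp add: power2_diff sum.distrib sum_subtractf sum_distrib_left mult.assoc)
  have e2: "(\<Sum>a\<in>X. \<Sum>b\<in>X. (u a)\<^sup>2) = real (card X) * (\<Sum>a\<in>X. (u a)\<^sup>2)"
    by (simp add: sum_distrib_left)
  have e3: "(\<Sum>a\<in>X. \<Sum>b\<in>X. (u b)\<^sup>2) = real (card X) * (\<Sum>a\<in>X. (u a)\<^sup>2)"
    using e2 sum.swap[of "\<lambda>a b. (u b)\<^sup>2" X X] by simp
  have e4: "(\<Sum>a\<in>X. \<Sum>b\<in>X. u a * u b) = (\<Sum>a\<in>X. u a)\<^sup>2"
    by (simp add: power2_eq_square sum_product)
  show ?thesis unfolding e1 e2 e3 e4 by simp
qed

lemma poincare:
  assumes "finite V" "1 \<le> l" "l \<le> k" "2*k \<le> card V" "orth V k l h"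
  shows "real l * (real (card V) + 1 - real l) / 2 * (\<Sum>R\<in>ksubsets V k. (h R)\<^sup>2)
     \<le> (\<Sum>p\<in>pairs V. \<Sum>S\<in>ksubsets (V - {fst p, snd p}) (k-1). (delta (fst p) (snd p) h S)\<^sup>2)"
proof -
  obtain k' where k': "k = Suc k'" using assms by (cases k) auto
  define n where "n = real (card V)"
  define H where "H = (\<Sum>R\<in>ksubsets V k. (h R)\<^sup>2)"
  have "(\<Sum>p\<in>pairs V. \<Sum>S\<in>ksubsets (V - {fst p, snd p}) (k-1). (delta (fst p) (snd p) h S)\<^sup>2)
     = (\<Sum>S\<in>ksubsets V k'. \<Sum>a\<in>V - S. \<Sum>b\<in>V - S - {a}. (delta a b h S)\<^sup>2)"
    using L_pairs[OF assms(1), where G = "\<lambda>a b S. (delta a b h S)\<^sup>2" and m = k'] k' by simp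
  also have "\<dots> = (\<Sum>S\<in>ksubsets V k'. \<Sum>a\<in>V - S. \<Sum>b\<in>V - S. (delta a b h S)\<^sup>2)"
  proof (rule sum.cong[OF refl], rule sum.cong[OF refl])
    fix S a assume "S \<in> ksubsets V k'" "a \<in> V - S"
    then show "(\<Sum>b\<in>V - S - {a}. (delta a b h S)\<^sup>2) = (\<Sum>b\<in>V - S. (delta a b h S)\<^sup>2)"
      using sum.remove[of "V - S" a "\<lambda>b. (delta a b h S)\<^sup>2"] assms(1) by (simp add: delta_def)
  qed
  also have "\<dots> = (\<Sum>S\<in>ksubsets V k'. (2 * (n - real k') * (\<Sum>a\<in>V - S. (h (insert a S))\<^sup>2) - 2 * (dn V h S)\<^sup>2) / 4)"
  proof (rule sum.cong[OF refl])
    fix S assume S: "S \<in> ksubsets V k'"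
    have cS: "card (V - S) = card V - k'"
    proof -
      have "S \<subseteq> V" "card S = k'" using S by (auto simp: ksubsets_def)
      moreover have "finite S" using \<open>S \<subseteq> V\<close> assms(1) finite_subset by blast
      ultimately show ?thesis by (simp add: card_Diff_subset)
    qed
    have k'le: "k' \<le> card V" using assms k' by simp
    have "(\<Sum>a\<in>V - S. \<Sum>b\<in>V - S. (delta a b h S)\<^sup>2) = (\<Sum>a\<in>V - S. \<Sum>b\<in>V - S. (h (insert a S) - h (insert b S))\<^sup>2) / 4"
      by (simp add: delta_def power_divide sum_divide_distrib)
    also have "\<dots> = (2 * real (card (V - S)) * (\<Sum>a\<in>V - S. (h (insert a S))\<^sup>2) - 2 * (\<Sum>a\<in>V - S. h (insert a S))\<^sup>2) / 4"
      using sq_diff_sum[of "V - S" "\<lambda>a. h (insert a S)"] assms(1) by simp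
    also have "\<dots> = (2 * (n - real k') * (\<Sum>a\<in>V - S. (h (insert a S))\<^sup>2) - 2 * (dn V h S)\<^sup>2) / 4"
      using cS k'le by (simp add: n_def dn_def of_nat_diff)
    finally show "(\<Sum>a\<in>V - S. \<Sum>b\<in>V - S. (delta a b h S)\<^sup>2) = (2 * (n - real k') * (\<Sum>a\<in>V - S. (h (insert a S))\<^sup>2) - 2 * (dn V h S)\<^sup>2) / 4" .
  qed
  also have "\<dots> = (2 * (n - real k') * (\<Sum>S\<in>ksubsets V k'. \<Sum>a\<in>V - S. (h (insert a S))\<^sup>2) - 2 * (\<Sum>S\<in>ksubsets V k'. (dn V h S)\<^sup>2)) / 4"
    by (simp add: sum_divide_distrib[symmetric] sum_subtractf sum_distrib_left)
  also have "(\<Sum>S\<in>ksubsets V k'. \<Sum>a\<in>V - S. (h (insert a S))\<^sup>2) = real k * H"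
  proof -
    have "(\<Sum>S\<in>ksubsets V k'. \<Sum>a\<in>V - S. (h (insert a S))\<^sup>2) = (\<Sum>R\<in>ksubsets V (Suc k'). \<Sum>x\<in>R. (h R)\<^sup>2)"
      by (rule flag[OF assms(1), symmetric])
    also have "\<dots> = (\<Sum>R\<in>ksubsets V k. real k * (h R)\<^sup>2)"
    proof (rule sum.cong)
      show "ksubsets V (Suc k') = ksubsets V k" using k' by simp
      fix R assume "R \<in> ksubsets V k"
      then have "card R = k" by (rule card_ksub)
      then show "(\<Sum>x\<in>R. (h R)\<^sup>2) = real k * (h R)\<^sup>2" by simp
    qed
    finally show ?thesis by (simp add: H_def sum_distrib_left)
  qed
  finally have eq: "(\<Sum>p\<in>pairs V. \<Sum>S\<in>ksubsets (V - {fst p, snd p}) (k-1). (delta (fst p) (snd p) h S)\<^sup>2)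
     = (2 * (n - real k') * (real k * H) - 2 * (\<Sum>S\<in>ksubsets V k'. (dn V h S)\<^sup>2)) / 4" .
  have db: "(\<Sum>S\<in>ksubsets V k'. (dn V h S)\<^sup>2) \<le> real (k - l) * (n - real k - real l + 1) * H"
    using down_bound[OF assms(1,2,3,4,5)] k' by (simp add: n_def H_def)
  have H0: "H \<ge> 0" unfolding H_def by (simp add: sum_nonneg)
  have alg: "(2 * (n - real k') * (real k * H) - 2 * (real (k - l) * (n - real k - real l + 1) * H)) / 4
      = real l * (n + 1 - real l) / 2 * H"
    using k' assms(3) by (simp add: of_nat_diff field_simps)
  have fin: "real l * (n + 1 - real l) / 2 * H \<le> (2 * (n - real k') * (real k * H) - 2 * (\<Sum>S\<in>ksubsets V k'. (dn V h S)\<^sup>2)) / 4"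
  proof -
    have "(2 * (n - real k') * (real k * H) - 2 * (real (k - l) * (n - real k - real l + 1) * H)) / 4
       \<le> (2 * (n - real k') * (real k * H) - 2 * (\<Sum>S\<in>ksubsets V k'. (dn V h S)\<^sup>2)) / 4"
      by (rule divide_right_mono) (use db in linarith)+
    then show ?thesis unfolding alg .
  qed
  show ?thesis using eq fin by (simp add: n_def H_def)
qed

lemma finite_sperms: "finite V \<Longrightarrow> finite (sperms V s)"
  unfolding sperms_def by (rule finite_subset[OF _ finite_lists_length_eq[of V s]]) auto

lemma sperms_Suc_iff:
  "xs \<in> sperms V (2 * Suc r) \<longleftrightarrow>
     (\<exists>a b ys. xs = a # b # ys \<and> (a,b) \<in> pairs V \<and> ys \<in> sperms (V - {a,b}) (2*r))"
proof
  assume "xs \<in> sperms V (2 * Suc r)"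
  then have "length xs = Suc (Suc (2*r))" "distinct xs" "set xs \<subseteq> V" by (auto simp: sperms_def)
  then obtain a b ys where "xs = a # b # ys" by (metis length_Suc_conv)
  then show "\<exists>a b ys. xs = a # b # ys \<and> (a,b) \<in> pairs V \<and> ys \<in> sperms (V - {a,b}) (2*r)"
    using \<open>length xs = _\<close> \<open>distinct xs\<close> \<open>set xs \<subseteq> V\<close> by (auto simp: sperms_def pairs_def)
next
  assume "\<exists>a b ys. xs = a # b # ys \<and> (a,b) \<in> pairs V \<and> ys \<in> sperms (V - {a,b}) (2*r)"
  then show "xs \<in> sperms V (2 * Suc r)" by (auto simp: sperms_def pairs_def)
qed

lemma sum_sperms_Suc:
  assumes "finite V"
  shows "(\<Sum>xs\<in>sperms V (2 * Suc r). F xs)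
       = (\<Sum>p\<in>pairs V. \<Sum>ys\<in>sperms (V - {fst p, snd p}) (2*r). F (fst p # snd p # ys))"
proof -
  have "(\<Sum>p\<in>pairs V. \<Sum>ys\<in>sperms (V - {fst p, snd p}) (2*r). F (fst p # snd p # ys))
      = (\<Sum>(p,ys)\<in>Sigma (pairs V) (\<lambda>p. sperms (V - {fst p, snd p}) (2*r)). F (fst p # snd p # ys))"
    by (rule sum.Sigma) (use assms finite_pairs in \<open>auto intro: finite_sperms\<close>)
  also have "\<dots> = (\<Sum>xs\<in>sperms V (2 * Suc r). F xs)"
  proof (rule sum.reindex_bij_witness[where j="\<lambda>(p,ys). fst p # snd p # ys"
        and i="\<lambda>xs. ((hd xs, hd (tl xs)), tl (tl xs))"])
    fix q assume "q \<in> Sigma (pairs V) (\<lambda>p. sperms (V - {fst p, snd p}) (2*r))"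
    then show "(case q of (p, ys) \<Rightarrow> fst p # snd p # ys) \<in> sperms V (2 * Suc r)"
      by (auto simp: sperms_def pairs_def split: prod.splits)
  next
    fix xs assume "xs \<in> sperms V (2 * Suc r)"
    then obtain a b ys where "xs = a # b # ys \<and> (a,b) \<in> pairs V \<and> ys \<in> sperms (V - {a,b}) (2*r)"
      unfolding sperms_Suc_iff by blast
    then show "((hd xs, hd (tl xs)), tl (tl xs)) \<in> Sigma (pairs V) (\<lambda>p. sperms (V - {fst p, snd p}) (2*r))"
      and "(case ((hd xs, hd (tl xs)), tl (tl xs)) of (p, ys) \<Rightarrow> fst p # snd p # ys) = xs"
      by auto
  qed auto
  finally show ?thesis by simp
qed

lemma card_sperms:
  assumes "finite W"
  shows "card (sperms W s) = (if s \<le> card W then \<Prod>{card W - s + 1..card W} else 0)"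
proof (cases "s \<le> card W")
  case True then show ?thesis using card_lists_distinct_length_eq[OF assms True] by (simp add: sperms_def)
next
  case False
  have "sperms W s = {}"
  proof (rule ccontr)
    assume "sperms W s \<noteq> {}"
    then obtain xs where "length xs = s" "distinct xs" "set xs \<subseteq> W" by (auto simp: sperms_def)
    then have "s \<le> card W" using card_mono[OF assms] distinct_card by metis
    then show False using False by simp
  qed
  then show ?thesis using False by simp
qed

lemma card_pairs_sub:
  assumes "finite V" "p \<in> pairs V"
  shows "card (V - {fst p, snd p}) = card V - 2"
  using assms by (auto simp: pairs_def card_Diff_subset)

lemma avg_sperms_Suc:
  assumes "finite V"
  shows "avg (sperms V (2 * Suc r)) F
       = avg (pairs V) (\<lambda>p. avg (sperms (V - {fst p, snd p}) (2*r)) (\<lambda>ys. F (fst p # snd p # ys)))"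
proof -
  define M where "M = card (sperms (V - {fst (SOME p. True), snd (SOME p. True)}) (2*r))"
  define m where "m = (if 2*r \<le> card V - 2 then \<Prod>{card V - 2 - 2*r + 1..card V - 2} else 0)"
  have cM: "card (sperms (V - {fst p, snd p}) (2*r)) = m" if "p \<in> pairs V" for p
    using card_sperms[of "V - {fst p, snd p}" "2*r"] card_pairs_sub[OF assms that] assms
    by (simp add: m_def)
  have "card (sperms V (2 * Suc r)) = (\<Sum>xs\<in>sperms V (2 * Suc r). 1)" by simp
  also have "\<dots> = (\<Sum>p\<in>pairs V. \<Sum>ys\<in>sperms (V - {fst p, snd p}) (2*r). 1)"
    by (rule sum_sperms_Suc[OF assms])
  also have "\<dots> = (\<Sum>p\<in>pairs V. m)" using cM by simp
  finally have cS: "card (sperms V (2 * Suc r)) = card (pairs V) * m" by simp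
  have "avg (pairs V) (\<lambda>p. avg (sperms (V - {fst p, snd p}) (2*r)) (\<lambda>ys. F (fst p # snd p # ys)))
     = (\<Sum>p\<in>pairs V. (\<Sum>ys\<in>sperms (V - {fst p, snd p}) (2*r). F (fst p # snd p # ys)) / real m) / real (card (pairs V))"
    unfolding avg_def using cM by simp
  also have "\<dots> = (\<Sum>p\<in>pairs V. \<Sum>ys\<in>sperms (V - {fst p, snd p}) (2*r). F (fst p # snd p # ys)) / (real (card (pairs V)) * real m)"
    by (simp add: sum_divide_distrib[symmetric] divide_divide_eq_left mult.commute)
  also have "\<dots> = avg (sperms V (2 * Suc r)) F"
    unfolding avg_def sum_sperms_Suc[OF assms] cS by simp
  finally show ?thesis by simp
qed

lemma card_pair_one: "a \<noteq> b \<Longrightarrow> card (R \<inter> {a,b}) = 1 \<longleftrightarrow> (a\<in>R \<and> b\<notin>R) \<or> (b\<in>R \<and> a\<notin>R)"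
  by (cases "a \<in> R"; cases "b \<in> R") auto

lemma sperms_nth:
  assumes "ys \<in> sperms W (2*r)" "i < r"
  shows "ys ! (2*i) \<in> W" "ys ! (2*i+1) \<in> W"
  using assms by (auto simp: sperms_def intro!: subsetD[of "set ys" W] nth_mem)

lemma adm_Suc_eq:
  "admissible V k (Suc r) (a#b#ys) =
     {R\<in>ksubsets V k. card (R \<inter> {a,b}) = 1 \<and> (\<forall>i<r. card (R \<inter> {ys ! (2*i), ys ! (2*i+1)}) = 1)}"
  unfolding admissible_def All_less_Suc2 by simp

lemma adm_Suc_decomp:
  assumes "finite V" "(a,b) \<in> pairs V" "ys \<in> sperms (V - {a,b}) (2*r)" "1 \<le> k"
  shows "admissible V k (Suc r) (a#b#ys) =
     insert a ` admissible (V - {a,b}) (k-1) r ys \<union> insert b ` admissible (V - {a,b}) (k-1) r ys"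
    (is "?L = ?A \<union> ?B")
proof -
  have ab: "a \<in> V" "b \<in> V" "a \<noteq> b" using assms(2) by (auto simp: pairs_def)
  have yy: "ys ! (2*i) \<in> V - {a,b}" "ys ! (2*i+1) \<in> V - {a,b}" if "i < r" for i
    using sperms_nth[OF assms(3) that] by auto
  have int_ins: "insert c S \<inter> {ys ! (2*i), ys ! (2*i+1)} = S \<inter> {ys ! (2*i), ys ! (2*i+1)}"
    if "i < r" "c \<in> {a,b}" for i c S using yy[OF that(1)] that(2) by auto
  have int_del: "(R - {c}) \<inter> {ys ! (2*i), ys ! (2*i+1)} = R \<inter> {ys ! (2*i), ys ! (2*i+1)}"
    if "i < r" "c \<in> {a,b}" for i c R using yy[OF that(1)] that(2) by auto
  show ?thesis
  proof
    show "?L \<subseteq> ?A \<union> ?B"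
    proof
      fix R assume R: "R \<in> ?L"
      then have R1: "R \<subseteq> V" "card R = k" "card (R \<inter> {a,b}) = 1"
        and R2: "\<forall>i<r. card (R \<inter> {ys ! (2*i), ys ! (2*i+1)}) = 1"
        unfolding adm_Suc_eq by (auto simp: ksubsets_def)
      have fR: "finite R" using R1(1) assms(1) finite_subset by blast
      consider "a \<in> R" "b \<notin> R" | "b \<in> R" "a \<notin> R" using R1(3) card_pair_one[OF ab(3)] by blast
      then show "R \<in> ?A \<union> ?B"
      proof cases
        case 1
        have "R - {a} \<in> admissible (V - {a,b}) (k-1) r ys"
          unfolding admissible_def ksubsets_def using R1 R2 1 fR int_del[of _ a R] by auto
        moreover have "R = insert a (R - {a})" using 1 by auto
        ultimately show ?thesis by blast
      next
        case 2
        have "R - {b} \<in> admissible (V - {a,b}) (k-1) r ys"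
          unfolding admissible_def ksubsets_def using R1 R2 2 fR int_del[of _ b R] by auto
        moreover have "R = insert b (R - {b})" using 2 by auto
        ultimately show ?thesis by blast
      qed
    qed
    show "?A \<union> ?B \<subseteq> ?L"
    proof
      fix R assume "R \<in> ?A \<union> ?B"
      then obtain c S where c: "c \<in> {a,b}" "R = insert c S" and S: "S \<in> admissible (V - {a,b}) (k-1) r ys"
        by blast
      then have S1: "S \<subseteq> V - {a,b}" "card S = k - 1" "\<forall>i<r. card (S \<inter> {ys ! (2*i), ys ! (2*i+1)}) = 1"
        unfolding admissible_def ksubsets_def by auto
      have fS: "finite S" using S1(1) assms(1) finite_subset by blast
      have "c \<notin> S" using S1(1) c(1) by auto
      then have "card R = k" using c(2) fS S1(2) assms(4) by simp
      moreover have "R \<subseteq> V" using c S1(1) ab by auto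
      moreover have "card (R \<inter> {a,b}) = 1" using c S1(1) ab card_pair_one[OF ab(3), of R] by auto
      moreover have "\<forall>i<r. card (R \<inter> {ys ! (2*i), ys ! (2*i+1)}) = 1"
        using S1(3) int_ins[OF _ c(1), of _ S] c(2) by auto
      ultimately show "R \<in> ?L" unfolding adm_Suc_eq ksubsets_def by auto
    qed
  qed
qed

lemma finite_adm: "finite V \<Longrightarrow> finite (admissible V k r xs)"
  unfolding admissible_def by (rule finite_subset[of _ "ksubsets V k"]) (auto simp: finite_ksubsets)

lemma sum_adm_Suc:
  assumes "finite V" "(a,b) \<in> pairs V" "ys \<in> sperms (V - {a,b}) (2*r)" "1 \<le> k"
  shows "(\<Sum>R\<in>admissible V k (Suc r) (a#b#ys). G R)
       = (\<Sum>S\<in>admissible (V - {a,b}) (k-1) r ys. G (insert a S)) + (\<Sum>S\<in>admissible (V - {a,b}) (k-1) r ys. G (insert b S))"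
proof -
  let ?A = "admissible (V - {a,b}) (k-1) r ys"
  have ab: "a \<noteq> b" using assms(2) by (auto simp: pairs_def)
  have sub: "S \<subseteq> V - {a,b}" if "S \<in> ?A" for S using that by (auto simp: admissible_def ksubsets_def)
  have fA: "finite ?A" using assms(1) finite_adm by blast
  have inja: "inj_on (insert a) ?A"
  proof (rule inj_onI)
    fix S S' assume "S \<in> ?A" "S' \<in> ?A" "insert a S = insert a S'"
    moreover have "a \<notin> S" "a \<notin> S'" using sub \<open>S \<in> ?A\<close> \<open>S' \<in> ?A\<close> by auto
    ultimately show "S = S'" by (simp add: insert_ident)
  qed
  have injb: "inj_on (insert b) ?A"
  proof (rule inj_onI)
    fix S S' assume "S \<in> ?A" "S' \<in> ?A" "insert b S = insert b S'"
    moreover have "b \<notin> S" "b \<notin> S'" using sub \<open>S \<in> ?A\<close> \<open>S' \<in> ?A\<close> by auto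
    ultimately show "S = S'" by (simp add: insert_ident)
  qed
  have disj: "insert a ` ?A \<inter> insert b ` ?A = {}"
  proof (rule ccontr)
    assume "insert a ` ?A \<inter> insert b ` ?A \<noteq> {}"
    then obtain S S' where SS: "S \<in> ?A" "S' \<in> ?A" "insert a S = insert b S'" by blast
    moreover have "a \<notin> insert b S'" using sub[OF SS(2)] ab by auto
    ultimately show False by blast
  qed
  have "sum G (insert a ` ?A \<union> insert b ` ?A) = sum G (insert a ` ?A) + sum G (insert b ` ?A)"
    by (rule sum.union_disjoint) (use fA disj in auto)
  also have "\<dots> = (\<Sum>S\<in>?A. G (insert a S)) + (\<Sum>S\<in>?A. G (insert b S))"
    by (simp only: sum.reindex[OF inja] sum.reindex[OF injb] comp_def)
  finally show ?thesis unfolding adm_Suc_decomp[OF assms] .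
qed

lemma bset_Suc: "bset (a#b#ys) (Suc r) = insert b (bset ys r)"
proof -
  have "bset (a#b#ys) (Suc r) = {(a#b#ys) ! (2*i+1) | i. i < Suc r}" by (simp add: bset_def)
  also have "\<dots> = insert b {ys ! (2*i+1) | i. i < r}"
  proof
    show "{(a#b#ys) ! (2*i+1) | i. i < Suc r} \<subseteq> insert b {ys ! (2*i+1) | i. i < r}"
    proof
      fix x assume "x \<in> {(a#b#ys) ! (2*i+1) | i. i < Suc r}"
      then obtain i where i: "i < Suc r" "x = (a#b#ys) ! (2*i+1)" by blast
      show "x \<in> insert b {ys ! (2*i+1) | i. i < r}"
      proof (cases i)
        case 0 then show ?thesis using i by simp
      next
        case (Suc i') then show ?thesis using i by auto
      qed
    qed
    show "insert b {ys ! (2*i+1) | i. i < r} \<subseteq> {(a#b#ys) ! (2*i+1) | i. i < Suc r}"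
    proof
      fix x assume "x \<in> insert b {ys ! (2*i+1) | i. i < r}"
      then consider "x = b" | i where "i < r" "x = ys ! (2*i+1)" by blast
      then show "x \<in> {(a#b#ys) ! (2*i+1) | i. i < Suc r}"
      proof cases
        case 1 then show ?thesis by (intro CollectI exI[of _ 0]) simp
      next
        case 2 then show ?thesis by (intro CollectI exI[of _ "Suc i"]) simp
      qed
    qed
  qed
  finally show ?thesis by (simp add: bset_def)
qed

lemma bset_sub: "ys \<in> sperms W (2*r) \<Longrightarrow> bset ys r \<subseteq> W"
  unfolding bset_def using sperms_nth by blast

lemma Dv_Suc:
  assumes "finite V" "(a,b) \<in> pairs V" "ys \<in> sperms (V - {a,b}) (2*r)" "1 \<le> k"
  shows "Dv V k (Suc r) (a#b#ys) f = Dv (V - {a,b}) (k-1) r ys (delta a b f)"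
proof -
  let ?A = "admissible (V - {a,b}) (k-1) r ys"
  define B where "B = bset ys r"
  define s where "s = (\<lambda>S. (-1::real) ^ card (S \<inter> B))"
  have ab: "a \<noteq> b" using assms(2) by (auto simp: pairs_def)
  have B: "B \<subseteq> V - {a,b}" unfolding B_def by (rule bset_sub[OF assms(3)])
  have sub: "S \<subseteq> V - {a,b}" if "S \<in> ?A" for S using that by (auto simp: admissible_def ksubsets_def)
  have fS: "finite S" if "S \<in> ?A" for S using sub[OF that] assms(1) finite_subset by blast
  have sa: "(-1::real) ^ card (insert a S \<inter> bset (a#b#ys) (Suc r)) * f (insert a S) = s S * f (insert a S)"
    if "S \<in> ?A" for S
  proof -
    have "insert a S \<inter> insert b B = S \<inter> B" using B sub[OF that] ab by auto
    then show ?thesis by (simp add: bset_Suc B_def[symmetric] s_def)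
  qed
  have sb: "(-1::real) ^ card (insert b S \<inter> bset (a#b#ys) (Suc r)) * f (insert b S) = - (s S * f (insert b S))"
    if "S \<in> ?A" for S
  proof -
    have "insert b S \<inter> insert b B = insert b (S \<inter> B)" by auto
    moreover have "b \<notin> S \<inter> B" using sub[OF that] by auto
    moreover have "finite (S \<inter> B)" using fS[OF that] by simp
    ultimately show ?thesis by (simp add: bset_Suc B_def[symmetric] s_def)
  qed
  have cA: "card (admissible V k (Suc r) (a#b#ys)) = 2 * card ?A"
    using sum_adm_Suc[OF assms, of "\<lambda>_. (1::nat)"] by simp
  have "Dv V k (Suc r) (a#b#ys) f
      = ((\<Sum>S\<in>?A. s S * f (insert a S)) + (\<Sum>S\<in>?A. - (s S * f (insert b S)))) / real (2 * card ?A)"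
  proof -
    have e1: "(\<Sum>S\<in>?A. (-1::real) ^ card (insert a S \<inter> bset (a#b#ys) (Suc r)) * f (insert a S)) = (\<Sum>S\<in>?A. s S * f (insert a S))"
      by (rule sum.cong[OF refl]) (rule sa)
    have e2: "(\<Sum>S\<in>?A. (-1::real) ^ card (insert b S \<inter> bset (a#b#ys) (Suc r)) * f (insert b S)) = (\<Sum>S\<in>?A. - (s S * f (insert b S)))"
      by (rule sum.cong[OF refl]) (rule sb)
    show ?thesis unfolding Dv_def avg_def sum_adm_Suc[OF assms] cA e1 e2 ..
  qed
  also have "\<dots> = (\<Sum>S\<in>?A. s S * delta a b f S) / real (card ?A)"
    by (simp add: delta_def sum_subtractf[symmetric] sum_divide_distrib[symmetric] right_diff_distrib
        sum_negf divide_divide_eq_left algebra_simps)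
  also have "\<dots> = Dv (V - {a,b}) (k-1) r ys (delta a b f)"
    unfolding Dv_def avg_def s_def B_def by simp
  finally show ?thesis .
qed

lemma W2_Suc:
  assumes "finite V" "1 \<le> k"
  shows "W2 V k (Suc r) f = avg (pairs V) (\<lambda>p. W2 (V - {fst p, snd p}) (k-1) r (delta (fst p) (snd p) f))"
proof -
  have "W2 V k (Suc r) f = avg (pairs V) (\<lambda>p. avg (sperms (V - {fst p, snd p}) (2 * r)) (\<lambda>ys. (Dv V k (Suc r) (fst p # snd p # ys) f)\<^sup>2))"
    unfolding W2_def by (rule avg_sperms_Suc[OF assms(1)])
  also have "\<dots> = avg (pairs V) (\<lambda>p. W2 (V - {fst p, snd p}) (k-1) r (delta (fst p) (snd p) f))"
    unfolding avg_def W2_def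
  proof (intro arg_cong2[where f="(/)"] sum.cong refl)
    fix p ys assume p: "p \<in> pairs V" and ys: "ys \<in> sperms (V - {fst p, snd p}) (2 * r)"
    show "(Dv V k (Suc r) (fst p # snd p # ys) f)\<^sup>2 = (Dv (V - {fst p, snd p}) (k - 1) r ys (delta (fst p) (snd p) f))\<^sup>2"
      using Dv_Suc[OF assms(1) _ _ assms(2), of "fst p" "snd p" ys r f] p ys by simp
  qed
  finally show ?thesis .
qed

lemma sum_ins_pair:
  fixes F1 F2 :: "'a set \<Rightarrow> real"
  assumes "finite V" "(a,b) \<in> pairs V" "1 \<le> k"
  shows "(\<Sum>S\<in>ksubsets (V - {a,b}) (k-1). F1 (insert a S)) - (\<Sum>S\<in>ksubsets (V - {a,b}) (k-1). F2 (insert b S))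
       = (\<Sum>R\<in>ksubsets V k. (if a \<in> R \<and> b \<notin> R then F1 R else 0) - (if b \<in> R \<and> a \<notin> R then F2 R else 0))"
proof -
  have ab: "a \<in> V" "b \<in> V" "a \<noteq> b" using assms(2) by (auto simp: pairs_def)
  have e: "V - {b,a} = V - {a,b}" by auto
  have fK: "finite (ksubsets V k)" using assms(1) finite_ksubsets by blast
  have 1: "(\<Sum>S\<in>ksubsets (V - {a,b}) (k-1). F1 (insert a S)) = (\<Sum>R\<in>ksubsets V k. if a \<in> R \<and> b \<notin> R then F1 R else 0)"
    unfolding L_ins[OF assms(1) ab(1,2,3) assms(3)] using sum.inter_filter[OF fK] by simp
  have 2: "(\<Sum>S\<in>ksubsets (V - {a,b}) (k-1). F2 (insert b S)) = (\<Sum>R\<in>ksubsets V k. if b \<in> R \<and> a \<notin> R then F2 R else 0)"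
    using L_ins[OF assms(1) ab(2,1) ab(3)[symmetric] assms(3), of F2] sum.inter_filter[OF fK] unfolding e by simp
  show ?thesis unfolding 1 2 by (simp add: sum_subtractf)
qed

lemma sigma_zero:
  assumes "finite V" "orth (V - {a,b}) m j x" "card T' < j \<or> \<not> T' \<subseteq> V - {a,b}"
  shows "(\<Sum>S\<in>ksubsets (V - {a,b}) m. if T' \<subseteq> S then x S else 0) = 0"
proof (cases "T' \<subseteq> V - {a,b}")
  case True
  have "(\<Sum>S\<in>ksubsets (V - {a,b}) m. if T' \<subseteq> S then x S else 0) = (\<Sum>S\<in>{S\<in>ksubsets (V - {a,b}) m. T' \<subseteq> S}. x S)"
    by (rule sum.inter_filter[symmetric]) (use assms(1) finite_ksubsets in blast)
  also have "\<dots> = 0" using assms(2,3) True unfolding orth_def by auto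
  finally show ?thesis .
next
  case False
  have "\<forall>S\<in>ksubsets (V - {a,b}) m. \<not> T' \<subseteq> S" using False by (auto simp: ksubsets_def)
  then show ?thesis by simp
qed

lemma delta_orth:
  assumes "finite V" "(a,b) \<in> pairs V" "1 \<le> k" "orth V k (Suc j) h"
  shows "orth (V - {a,b}) (k-1) j (delta a b h)"
  unfolding orth_def
proof (intro allI impI)
  fix T assume T: "T \<subseteq> V - {a,b} \<and> card T < j"
  let ?K' = "ksubsets (V - {a,b}) (k-1)"
  have fK: "finite (ksubsets V k)" "finite ?K'" using assms(1) finite_ksubsets by blast+
  have fT: "finite T" using T assms(1) finite_subset by blast
  have ab: "a \<notin> T" "b \<notin> T" using T by auto
  define F where "F = (\<lambda>R. if T \<subseteq> R then h R else 0)"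
  have "(\<Sum>S\<in>{S\<in>?K'. T \<subseteq> S}. delta a b h S) = (\<Sum>S\<in>?K'. if T \<subseteq> S then delta a b h S else 0)"
    by (rule sum.inter_filter[OF fK(2)])
  also have "\<dots> = ((\<Sum>S\<in>?K'. F (insert a S)) - (\<Sum>S\<in>?K'. F (insert b S))) / 2"
  proof -
    have "(\<Sum>S\<in>?K'. if T \<subseteq> S then delta a b h S else 0) = (\<Sum>S\<in>?K'. (F (insert a S) - F (insert b S)) / 2)"
    proof (rule sum.cong[OF refl])
      fix S
      have "T \<subseteq> insert a S \<longleftrightarrow> T \<subseteq> S" "T \<subseteq> insert b S \<longleftrightarrow> T \<subseteq> S" using ab by auto
      then show "(if T \<subseteq> S then delta a b h S else 0) = (F (insert a S) - F (insert b S)) / 2"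
        by (simp add: F_def delta_def)
    qed
    then show ?thesis by (simp add: sum_divide_distrib[symmetric] sum_subtractf)
  qed
  also have "\<dots> = (\<Sum>R\<in>ksubsets V k. (if a \<in> R \<and> b \<notin> R then F R else 0) - (if b \<in> R \<and> a \<notin> R then F R else 0)) / 2"
    unfolding sum_ins_pair[OF assms(1-3)] ..
  also have "\<dots> = ((\<Sum>R\<in>ksubsets V k. if insert a T \<subseteq> R then h R else 0) - (\<Sum>R\<in>ksubsets V k. if insert b T \<subseteq> R then h R else 0)) / 2"
    unfolding sum_subtractf[symmetric] by (intro arg_cong2[where f="(/)"] sum.cong refl) (auto simp: F_def)
  also have "\<dots> = 0"
  proof -
    have "(\<Sum>R\<in>ksubsets V k. if insert c T \<subseteq> R then h R else 0) = 0" if "c \<in> {a,b}" for c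
    proof -
      have "(\<Sum>R\<in>ksubsets V k. if insert c T \<subseteq> R then h R else 0) = (\<Sum>R\<in>{R\<in>ksubsets V k. insert c T \<subseteq> R}. h R)"
        by (rule sum.inter_filter[symmetric, OF fK(1)])
      also have "\<dots> = 0"
      proof -
        have "insert c T \<subseteq> V" using T that assms(2) by (auto simp: pairs_def)
        moreover have "card (insert c T) < Suc j" using T fT by (simp add: card_insert_if)
        ultimately show ?thesis using assms(4) unfolding orth_def by blast
      qed
      finally show ?thesis .
    qed
    then show ?thesis by simp
  qed
  finally show "(\<Sum>S\<in>{S\<in>?K'. T \<subseteq> S}. delta a b h S) = 0" .
qed

lemma delta_inU:
  assumes "finite V" "(a,b) \<in> pairs V" "1 \<le> k" "inU V k (Suc j) g"
  shows "inU (V - {a,b}) (k-1) j (delta a b g)"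
  unfolding inU_def
proof (intro allI impI)
  fix x assume ox: "orth (V - {a,b}) (k-1) j x"
  let ?K' = "ksubsets (V - {a,b}) (k-1)"
  have ab: "a \<in> V" "b \<in> V" "a \<noteq> b" using assms(2) by (auto simp: pairs_def)
  have fK: "finite (ksubsets V k)" "finite ?K'" using assms(1) finite_ksubsets by blast+
  have subK: "a \<notin> S" "b \<notin> S" if "S \<in> ?K'" for S using that by (auto simp: ksubsets_def)
  define \<psi> where "\<psi> = (\<lambda>R. (if a \<in> R \<and> b \<notin> R then x (R - {a}) else 0) - (if b \<in> R \<and> a \<notin> R then x (R - {b}) else 0))"
  have "ip (V - {a,b}) (k-1) x (delta a b g) = ((\<Sum>S\<in>?K'. x S * g (insert a S)) - (\<Sum>S\<in>?K'. x S * g (insert b S))) / 2"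
    by (simp add: ip_def delta_def sum_divide_distrib[symmetric] sum_subtractf[symmetric] right_diff_distrib)
  also have "\<dots> = ((\<Sum>S\<in>?K'. (\<lambda>R. x (R - {a}) * g R) (insert a S)) - (\<Sum>S\<in>?K'. (\<lambda>R. x (R - {b}) * g R) (insert b S))) / 2"
  proof -
    have "(\<Sum>S\<in>?K'. x S * g (insert a S)) = (\<Sum>S\<in>?K'. (\<lambda>R. x (R - {a}) * g R) (insert a S))"
      by (rule sum.cong[OF refl]) (use subK in simp)
    moreover have "(\<Sum>S\<in>?K'. x S * g (insert b S)) = (\<Sum>S\<in>?K'. (\<lambda>R. x (R - {b}) * g R) (insert b S))"
      by (rule sum.cong[OF refl]) (use subK in simp)
    ultimately show ?thesis by simp
  qed
  also have "\<dots> = (\<Sum>R\<in>ksubsets V k. (if a \<in> R \<and> b \<notin> R then x (R - {a}) * g R else 0) - (if b \<in> R \<and> a \<notin> R then x (R - {b}) * g R else 0)) / 2"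
    using sum_ins_pair[OF assms(1-3), of "\<lambda>R. x (R - {a}) * g R" "\<lambda>R. x (R - {b}) * g R"] by simp
  also have "\<dots> = ip V k \<psi> g / 2"
    unfolding ip_def \<psi>_def by (intro arg_cong2[where f="(/)"] sum.cong refl) (simp add: algebra_simps)
  also have "ip V k \<psi> g = 0"
  proof -
    have "orth V k (Suc j) \<psi>"
      unfolding orth_def
    proof (intro allI impI)
      fix T assume T: "T \<subseteq> V \<and> card T < Suc j"
      have fT: "finite T" using T assms(1) finite_subset by blast
      define \<sigma> where "\<sigma> = (\<lambda>T'. (\<Sum>S\<in>?K'. if T' \<subseteq> S then x S else 0))"
      have "(\<Sum>R\<in>{R\<in>ksubsets V k. T \<subseteq> R}. \<psi> R) = (\<Sum>R\<in>ksubsets V k. if T \<subseteq> R then \<psi> R else 0)"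
        by (rule sum.inter_filter[OF fK(1)])
      also have "\<dots> = (\<Sum>R\<in>ksubsets V k. (if a \<in> R \<and> b \<notin> R then (\<lambda>R. if T \<subseteq> R then x (R - {a}) else 0) R else 0)
                      - (if b \<in> R \<and> a \<notin> R then (\<lambda>R. if T \<subseteq> R then x (R - {b}) else 0) R else 0))"
        unfolding \<psi>_def by (intro sum.cong refl) auto
      also have "\<dots> = (\<Sum>S\<in>?K'. (\<lambda>R. if T \<subseteq> R then x (R - {a}) else 0) (insert a S))
                     - (\<Sum>S\<in>?K'. (\<lambda>R. if T \<subseteq> R then x (R - {b}) else 0) (insert b S))"
        by (rule sum_ins_pair[OF assms(1-3), symmetric])
      also have "\<dots> = \<sigma> (T - {a}) - \<sigma> (T - {b})"
      proof -
        have "(\<Sum>S\<in>?K'. (\<lambda>R. if T \<subseteq> R then x (R - {a}) else 0) (insert a S)) = \<sigma> (T - {a})"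
          unfolding \<sigma>_def
        proof (rule sum.cong[OF refl])
          fix S assume "S \<in> ?K'"
          then have "a \<notin> S" by (rule subK)
          then show "(if T \<subseteq> insert a S then x (insert a S - {a}) else 0) = (if T - {a} \<subseteq> S then x S else 0)"
            by auto
        qed
        moreover have "(\<Sum>S\<in>?K'. (\<lambda>R. if T \<subseteq> R then x (R - {b}) else 0) (insert b S)) = \<sigma> (T - {b})"
          unfolding \<sigma>_def
        proof (rule sum.cong[OF refl])
          fix S assume "S \<in> ?K'"
          then have "b \<notin> S" by (rule subK)
          then show "(if T \<subseteq> insert b S then x (insert b S - {b}) else 0) = (if T - {b} \<subseteq> S then x S else 0)"
            by auto
        qed
        ultimately show ?thesis by simp
      qed
      also have "\<dots> = 0"
      proof -
        have z: "\<sigma> T' = 0" if "card T' < j \<or> \<not> T' \<subseteq> V - {a,b}" for T'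
          unfolding \<sigma>_def by (rule sigma_zero[OF assms(1) ox that])
        have cl: "card (T - {c}) < j" if "c \<in> T" for c
        proof -
          have "card T > 0" using fT that card_gt_0_iff by blast
          moreover have "card T < Suc j" using T by simp
          ultimately show ?thesis using fT that by (simp add: card_Diff_singleton)
        qed
        show ?thesis
        proof (cases "a \<in> T")
          case True
          have "\<sigma> (T - {a}) = 0" using z[OF disjI1[OF cl[OF True]]] .
          moreover have "\<sigma> (T - {b}) = 0"
          proof (cases "b \<in> T")
            case True show ?thesis using z[OF disjI1[OF cl[OF True]]] .
          next
            case False then have "\<not> T - {b} \<subseteq> V - {a,b}" using \<open>a \<in> T\<close> by auto
            then show ?thesis using z[OF disjI2] by simp
          qed
          ultimately show ?thesis by simp
        next
          case False
          show ?thesis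
          proof (cases "b \<in> T")
            case True
            then have "\<not> T - {a} \<subseteq> V - {a,b}" using False by auto
            then have "\<sigma> (T - {a}) = 0" using z[OF disjI2] by simp
            moreover have "\<sigma> (T - {b}) = 0" using z[OF disjI1[OF cl[OF True]]] .
            ultimately show ?thesis by simp
          next
            case False
            then show ?thesis using \<open>a \<notin> T\<close> by simp
          qed
        qed
      qed
      finally show "(\<Sum>R\<in>{R\<in>ksubsets V k. T \<subseteq> R}. \<psi> R) = 0" .
    qed
    then show ?thesis using assms(4) unfolding inU_def by blast
  qed
  finally show "ip (V - {a,b}) (k-1) x (delta a b g) = 0" by simp
qed

lemma sperms_0: "sperms V 0 = {[]}" by (auto simp: sperms_def)

lemma Dv_0: "Dv V k 0 [] f = avg (ksubsets V k) f"
  by (simp add: Dv_def admissible_def bset_def)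

lemma Dv_zero_orth:
  assumes "finite V" "r \<le> k" "xs \<in> sperms V (2*r)" "orth V k (Suc r) h"
  shows "Dv V k r xs h = 0"
  using assms
proof (induction r arbitrary: V k xs h)
  case 0
  then have xs: "xs = []" by (simp add: sperms_def)
  have "{} \<subseteq> V \<and> card ({}::'a set) < Suc 0" by simp
  then have "(\<Sum>R\<in>{R\<in>ksubsets V k. {} \<subseteq> R}. h R) = 0" using "0.prems"(4) unfolding orth_def by blast
  then show ?case unfolding xs Dv_0 avg_def by simp
next
  case (Suc r)
  obtain a b ys where xs: "xs = a # b # ys" and p: "(a,b) \<in> pairs V" and ys: "ys \<in> sperms (V - {a,b}) (2*r)"
    using Suc.prems(3) unfolding sperms_Suc_iff by blast
  have k: "1 \<le> k" using Suc.prems(2) by simp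
  have "Dv V k (Suc r) xs h = Dv (V - {a,b}) (k-1) r ys (delta a b h)"
    unfolding xs by (rule Dv_Suc[OF Suc.prems(1) p ys k])
  also have "\<dots> = 0"
    by (rule Suc.IH) (use Suc.prems ys delta_orth[OF Suc.prems(1) p k Suc.prems(4)] in auto)
  finally show ?case .
qed

lemma orth_mono: "orth V k j' x \<Longrightarrow> j \<le> j' \<Longrightarrow> orth V k j x"
  unfolding orth_def by auto

lemma inU_mono: "inU V k j g \<Longrightarrow> j \<le> j' \<Longrightarrow> inU V k j' g"
  unfolding inU_def using orth_mono by blast

lemma inU_zero:
  assumes "finite V" "inU V k 0 g" "R \<in> ksubsets V k"
  shows "g R = 0"
proof -
  have "orth V k 0 g" unfolding orth_def by simp
  then have "ip V k g g = 0" using assms(2) unfolding inU_def by blast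
  then have "(\<Sum>R\<in>ksubsets V k. (g R)\<^sup>2) = 0" by (simp add: ip_def power2_eq_square)
  moreover have fin: "finite (ksubsets V k)" by (rule finite_ksubsets[OF assms(1)])
  ultimately have "\<forall>R\<in>ksubsets V k. (g R)\<^sup>2 = 0" using sum_nonneg_eq_0_iff[OF fin, of "\<lambda>R. (g R)\<^sup>2"] by simp
  then show ?thesis using assms(3) by simp
qed

lemma Dv_zero_inU:
  assumes "finite V" "r \<le> k" "j \<le> r" "xs \<in> sperms V (2*r)" "inU V k j g"
  shows "Dv V k r xs g = 0"
  using assms
proof (induction r arbitrary: V k xs g j)
  case 0
  then have xs: "xs = []" by (simp add: sperms_def)
  have "inU V k 0 g" using "0.prems" by simp
  then have "\<forall>R\<in>ksubsets V k. g R = 0" using inU_zero "0.prems"(1) by blast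
  then show ?case unfolding xs Dv_0 avg_def by simp
next
  case (Suc r)
  obtain a b ys where xs: "xs = a # b # ys" and p: "(a,b) \<in> pairs V" and ys: "ys \<in> sperms (V - {a,b}) (2*r)"
    using Suc.prems(4) unfolding sperms_Suc_iff by blast
  have k: "1 \<le> k" using Suc.prems(2) by simp
  have U: "inU V k (Suc r) g" using inU_mono[OF Suc.prems(5)] Suc.prems(3) by simp
  have "Dv V k (Suc r) xs g = Dv (V - {a,b}) (k-1) r ys (delta a b g)"
    unfolding xs by (rule Dv_Suc[OF Suc.prems(1) p ys k])
  also have "\<dots> = 0"
    by (rule Suc.IH[where j=r]) (use Suc.prems ys delta_inU[OF Suc.prems(1) p k U] in auto)
  finally show ?case .
qed

lemma Dv_add: "Dv V k r xs (\<lambda>R. g R + h R) = Dv V k r xs g + Dv V k r xs h"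
  by (simp add: Dv_def avg_def algebra_simps sum.distrib add_divide_distrib)

lemma W2_add_zero:
  assumes "\<forall>xs\<in>sperms V (2*r). Dv V k r xs g = 0"
  shows "W2 V k r (\<lambda>R. g R + h R) = W2 V k r h"
  unfolding W2_def avg_def using assms by (simp add: Dv_add)

lemma W2_zero:
  assumes "\<forall>xs\<in>sperms V (2*r). Dv V k r xs g = 0"
  shows "W2 V k r g = 0"
  unfolding W2_def avg_def using assms by simp

lemma W2_nonneg: "W2 V k r f \<ge> 0"
  unfolding W2_def avg_def by (simp add: sum_nonneg)

lemma card_pairs: "finite V \<Longrightarrow> card (pairs V) = card V * (card V - 1)"
proof -
  assume fV: "finite V"
  have "pairs V = Sigma V (\<lambda>a. V - {a})" by (auto simp: pairs_def)
  then have "card (pairs V) = (\<Sum>a\<in>V. card (V - {a}))" using fV by (simp add: card_SigmaI)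
  also have "\<dots> = (\<Sum>a\<in>V. card V - 1)" using fV by (intro sum.cong refl) (simp add: card_Diff_singleton)
  finally show ?thesis by simp
qed

lemma binom_id_nat:
  "((N - 2) choose k') * (N * (N - 1)) = Suc k' * (N - Suc k') * (N choose Suc k')"
proof -
  have 1: "Suc k' * (N choose Suc k') = N * ((N-1) choose k')" by (rule binomial_absorption)
  have 2: "(N - 1 - k') * ((N-1) choose k') = (N-1) * ((N - 1 - 1) choose k')" by (rule binomial_absorb_comp)
  have e: "N - Suc k' = N - 1 - k'" "N - 1 - 1 = N - 2" by simp_all
  have "Suc k' * (N - Suc k') * (N choose Suc k') = (N - Suc k') * (Suc k' * (N choose Suc k'))" by (simp only: mult_ac)
  also have "\<dots> = (N - Suc k') * (N * ((N-1) choose k'))" by (simp only: 1)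
  also have "\<dots> = N * ((N - 1 - k') * ((N-1) choose k'))" by (simp only: e ac_simps)
  also have "\<dots> = N * ((N-1) * ((N - 2) choose k'))" by (simp only: 2 e)
  finally show ?thesis by (simp add: ac_simps)
qed

lemma binom_id:
  assumes "1 \<le> k" "k \<le> N"
  shows "real ((N - 2) choose (k - 1)) * (real N * (real N - 1)) = real k * (real N - real k) * real (N choose k)"
proof -
  obtain k' where k': "k = Suc k'" using assms by (cases k) auto
  have E2: "real ((N - 2) choose k') * (real N * real (N - 1)) = real (Suc k') * real (N - Suc k') * real (N choose Suc k')"
    using arg_cong[where f=real, OF binom_id_nat[of N k']] by (simp only: of_nat_mult)
  have e1: "real (N - 1) = real N - 1" using assms by (simp add: of_nat_diff)
  have e2: "real (N - Suc k') = real N - real (Suc k')" using k' assms by (simp only: of_nat_diff)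
  have E3: "real ((N - 2) choose k') * (real N * (real N - 1)) = real (Suc k') * (real N - real (Suc k')) * real (N choose Suc k')"
    using E2 unfolding e1 e2 .
  show ?thesis unfolding k' diff_Suc_1 by (rule E3)
qed

lemma sum_card_avg: "finite S \<Longrightarrow> sum f S = real (card S) * avg S f"
  by (cases "card S = 0") (auto simp: avg_def)

lemma pure:
  assumes "finite V" "l \<le> k" "2*k \<le> card V" "orth V k l v" "inU V k (Suc l) v"
  shows "avg (ksubsets V k) (\<lambda>R. (v R)\<^sup>2) \<le> 2^l * real (k choose l) * W2 V k l v"
  using assms
proof (induction l arbitrary: V k v)
  case 0
  define K where "K = ksubsets V k"
  define c where "c = avg K v"
  have fK: "finite K" unfolding K_def using "0.prems"(1) finite_ksubsets by blast
  define x where "x = (\<lambda>R. v R - c)"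
  have sx: "(\<Sum>R\<in>K. x R) = 0"
  proof (cases "card K = 0")
    case True then have "K = {}" using fK by simp
    then show ?thesis by simp
  next
    case False
    have "(\<Sum>R\<in>K. x R) = (\<Sum>R\<in>K. v R) - real (card K) * c" by (simp add: x_def sum_subtractf)
    also have "\<dots> = 0" using False by (simp add: c_def avg_def)
    finally show ?thesis .
  qed
  have ox: "orth V k (Suc 0) x"
    unfolding orth_def
  proof (intro allI impI)
    fix T :: "'a set" assume "T \<subseteq> V \<and> card T < Suc 0"
    then have "T = {}" using "0.prems"(1) finite_subset by fastforce
    then show "(\<Sum>R\<in>{R\<in>ksubsets V k. T \<subseteq> R}. x R) = 0" using sx by (simp add: K_def)
  qed
  then have "ip V k x v = 0" using "0.prems"(5) unfolding inU_def by simp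
  moreover have "ip V k x (\<lambda>_. c) = 0" using sx by (simp add: ip_def K_def sum_distrib_right[symmetric])
  ultimately have "ip V k x x = 0" by (simp add: ip_def x_def right_diff_distrib sum_subtractf)
  then have "(\<Sum>R\<in>K. (x R)\<^sup>2) = 0" by (simp add: ip_def K_def power2_eq_square)
  then have "\<forall>R\<in>K. (x R)\<^sup>2 = 0" using sum_nonneg_eq_0_iff[OF fK, of "\<lambda>R. (x R)\<^sup>2"] by simp
  then have vc: "\<forall>R\<in>K. v R = c" by (simp add: x_def)
  have "avg K (\<lambda>R. (v R)\<^sup>2) = avg K (\<lambda>R. c\<^sup>2)" unfolding avg_def using vc by simp
  also have "\<dots> \<le> c\<^sup>2" by (cases "card K = 0") (simp_all add: avg_def)
  also have "c\<^sup>2 = W2 V k 0 v" by (simp add: W2_def sperms_0 avg_def Dv_0 c_def K_def)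
  finally show ?case by (simp add: K_def)
next
  case (Suc l)
  define N where "N = card V"
  define K where "K = ksubsets V k"
  define A where "A = avg K (\<lambda>R. (v R)\<^sup>2)"
  define W where "W = W2 V k (Suc l) v"
  define B where "B = 2^l * real ((k-1) choose l)"
  define c1 where "c1 = real ((N - 2) choose (k - 1))"
  have k1: "1 \<le> k" using Suc.prems(2) by simp
  have N2: "2 \<le> N" using Suc.prems(3) k1 by (simp add: N_def)
  have fK: "finite K" unfolding K_def using Suc.prems(1) finite_ksubsets by blast
  have fP: "finite (pairs V)" using Suc.prems(1) finite_pairs by blast
  let ?Vp = "\<lambda>p. V - {fst p, snd p}"
  let ?d = "\<lambda>p. delta (fst p) (snd p) v"
  have cVp: "card (?Vp p) = N - 2" if "p \<in> pairs V" for p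
    using card_pairs_sub[OF Suc.prems(1) that] by (simp add: N_def)
  have IHp: "avg (ksubsets (?Vp p) (k-1)) (\<lambda>S. (?d p S)\<^sup>2) \<le> B * W2 (?Vp p) (k-1) l (?d p)"
    if p: "p \<in> pairs V" for p
  proof -
    have p': "(fst p, snd p) \<in> pairs V" using p by simp
    have "avg (ksubsets (?Vp p) (k-1)) (\<lambda>S. (?d p S)\<^sup>2) \<le> 2^l * real ((k-1) choose l) * W2 (?Vp p) (k-1) l (?d p)"
    proof (rule Suc.IH)
      show "finite (?Vp p)" using Suc.prems(1) by simp
      show "l \<le> k - 1" using Suc.prems(2) by simp
      show "2 * (k - 1) \<le> card (?Vp p)" using cVp[OF p] Suc.prems(3) by (simp add: N_def)
      show "orth (?Vp p) (k - 1) l (?d p)" by (rule delta_orth[OF Suc.prems(1) p' k1 Suc.prems(4)])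
      show "inU (?Vp p) (k - 1) (Suc l) (?d p)" by (rule delta_inU[OF Suc.prems(1) p' k1 Suc.prems(5)])
    qed
    then show ?thesis by (simp add: B_def)
  qed
  have Wp: "W = (\<Sum>p\<in>pairs V. W2 (?Vp p) (k-1) l (?d p)) / real (card (pairs V))"
    unfolding W_def W2_Suc[OF Suc.prems(1) k1] avg_def ..
  have cP: "real (card (pairs V)) = real N * (real N - 1)"
    using card_pairs[OF Suc.prems(1)] N2 by (simp add: N_def of_nat_diff)
  have cP0: "real (card (pairs V)) > 0" using cP N2 by simp
  have poinc: "real (Suc l) * (real N + 1 - real (Suc l)) / 2 * (\<Sum>R\<in>K. (v R)\<^sup>2)
      \<le> (\<Sum>p\<in>pairs V. \<Sum>S\<in>ksubsets (?Vp p) (k-1). (?d p S)\<^sup>2)"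
    unfolding K_def N_def by (rule poincare[OF Suc.prems(1) _ Suc.prems(2,3,4)]) simp
  have "(\<Sum>p\<in>pairs V. \<Sum>S\<in>ksubsets (?Vp p) (k-1). (?d p S)\<^sup>2)
      = (\<Sum>p\<in>pairs V. c1 * avg (ksubsets (?Vp p) (k-1)) (\<lambda>S. (?d p S)\<^sup>2))"
  proof (rule sum.cong[OF refl])
    fix p assume p: "p \<in> pairs V"
    have fin: "finite (?Vp p)" using Suc.prems(1) by simp
    show "(\<Sum>S\<in>ksubsets (?Vp p) (k-1). (?d p S)\<^sup>2) = c1 * avg (ksubsets (?Vp p) (k-1)) (\<lambda>S. (?d p S)\<^sup>2)"
      unfolding sum_card_avg[OF finite_ksubsets[OF fin]] card_ksubsets[OF fin] cVp[OF p] c1_def ..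
  qed
  also have "\<dots> \<le> (\<Sum>p\<in>pairs V. c1 * (B * W2 (?Vp p) (k-1) l (?d p)))"
    by (intro sum_mono mult_left_mono IHp) (simp_all add: c1_def)
  also have "\<dots> = c1 * B * (\<Sum>p\<in>pairs V. W2 (?Vp p) (k-1) l (?d p))"
    by (simp add: sum_distrib_left mult.assoc)
  also have "\<dots> = c1 * B * (real N * (real N - 1)) * W"
  proof -
    have "(\<Sum>p\<in>pairs V. W2 (?Vp p) (k-1) l (?d p)) = real (card (pairs V)) * W"
      using Wp cP0 by simp
    then have "(\<Sum>p\<in>pairs V. W2 (?Vp p) (k-1) l (?d p)) = (real N * (real N - 1)) * W"
      unfolding cP .
    then show ?thesis by (simp only: mult.assoc)
  qed
  finally have ineq: "real (Suc l) * (real N + 1 - real (Suc l)) / 2 * (real (N choose k) * A)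
      \<le> c1 * B * (real N * (real N - 1)) * W"
    using poinc sum_card_avg[OF fK, of "\<lambda>R. (v R)\<^sup>2"] card_ksubsets[OF Suc.prems(1), of k]
    by (simp add: A_def K_def N_def)
  have kN: "k \<le> N" using Suc.prems(3) by (simp add: N_def)
  have bid: "c1 * (real N * (real N - 1)) = real k * (real N - real k) * real (N choose k)"
    unfolding c1_def by (rule binom_id[OF k1 kN])
  have bid2: "real k * real ((k-1) choose l) = real (Suc l) * real (k choose Suc l)"
  proof -
    have "Suc l * (k choose Suc l) = k * ((k - 1) choose l)" by (rule binomial_absorption)
    then show ?thesis by (metis of_nat_mult)
  qed
  have C0: "real (N choose k) > 0" using kN by simp
  have A0: "A \<ge> 0" unfolding A_def avg_def by (simp add: sum_nonneg)
  have W0: "W \<ge> 0" unfolding W_def by (rule W2_nonneg)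
  define X where "X = 2 ^ Suc l * real (k choose Suc l) * W"
  have X0: "X \<ge> 0" unfolding X_def using W0 by simp
  have lhs: "real (Suc l) * (real N + 1 - real (Suc l)) / 2 * (real (N choose k) * A)
      = (real (Suc l) * (real N - real l) * A * real (N choose k)) / 2"
    by (simp add: algebra_simps)
  have rhs: "c1 * B * (real N * (real N - 1)) * W = (2 * (c1 * (real N * (real N - 1))) * B * W) / 2"
    by (simp add: algebra_simps)
  have "real (Suc l) * (real N - real l) * A * real (N choose k) \<le> 2 * (c1 * (real N * (real N - 1))) * B * W"
  proof -
    have "(real (Suc l) * (real N - real l) * A * real (N choose k)) / 2 \<le> (2 * (c1 * (real N * (real N - 1))) * B * W) / 2"
      using ineq unfolding lhs rhs .
    then show ?thesis by simp
  qed
  also have "\<dots> = real (N choose k) * (2 * (real N - real k) * 2^l * (real k * real ((k-1) choose l)) * W)"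
    unfolding bid B_def by (simp add: algebra_simps)
  also have "\<dots> = real (N choose k) * (real (Suc l) * ((real N - real k) * X))"
    unfolding bid2 X_def by (simp add: algebra_simps)
  finally have "real (N choose k) * (real (Suc l) * ((real N - real l) * A)) \<le> real (N choose k) * (real (Suc l) * ((real N - real k) * X))"
    by (simp add: algebra_simps)
  then have "(real N - real l) * A \<le> (real N - real k) * X"
    using C0 by (simp add: mult_le_cancel_left_pos)
  moreover have "(real N - real k) * A \<le> (real N - real l) * A"
    using A0 Suc.prems(2) by (intro mult_right_mono) auto
  ultimately have "(real N - real k) * A \<le> (real N - real k) * X" by linarith
  moreover have "real N - real k > 0" using Suc.prems(3) k1 by (simp add: N_def)
  ultimately have "A \<le> X" by simp
  then show ?case by (simp add: A_def X_def W_def K_def)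
qed

definition Bset :: "'a set \<Rightarrow> nat \<Rightarrow> ('a set \<Rightarrow> real) set" where
  "Bset V m = (\<lambda>T R. if T \<subseteq> R then 1 else 0) ` {T. T \<subseteq> V \<and> card T < m}"

lemma finite_Bset: "finite V \<Longrightarrow> finite (Bset V m)"
  unfolding Bset_def by (rule finite_imageI) (rule finite_subset[of _ "Pow V"], auto)

lemma orth_iff:
  assumes "finite V"
  shows "orth V k m x \<longleftrightarrow> (\<forall>b\<in>Bset V m. (\<Sum>R\<in>ksubsets V k. x R * b R) = 0)"
proof -
  have "(\<Sum>R\<in>ksubsets V k. x R * (if T \<subseteq> R then 1 else 0)) = (\<Sum>R\<in>{R\<in>ksubsets V k. T \<subseteq> R}. x R)" for T
    using sum.inter_filter[OF finite_ksubsets[OF assms], where g=x and P="\<lambda>R. T \<subseteq> R"] by (simp add: if_distrib cong: if_cong)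
  then show ?thesis unfolding orth_def Bset_def by auto
qed

lemma proj_orth:
  assumes "finite V"
  shows "\<exists>g. inU V k m g \<and> orth V k m (\<lambda>R. f R - g R)"
proof -
  obtain g where g: "\<forall>x. (\<forall>b\<in>Bset V m. (\<Sum>R\<in>ksubsets V k. x R * b R) = 0) \<longrightarrow> (\<Sum>R\<in>ksubsets V k. x R * g R) = 0"
      "\<forall>b\<in>Bset V m. (\<Sum>R\<in>ksubsets V k. (f R - g R) * b R) = 0"
    using proj_exists[OF finite_Bset[OF assms], where X="ksubsets V k" and f=f] by blast
  have "inU V k m g" unfolding inU_def ip_def using g(1) orth_iff[OF assms] by blast
  moreover have "orth V k m (\<lambda>R. f R - g R)" using g(2) orth_iff[OF assms] by blast
  ultimately show ?thesis by blast
qed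

lemma orth_diff: "orth V k j x \<Longrightarrow> orth V k j y \<Longrightarrow> orth V k j (\<lambda>R. x R - y R)"
  unfolding orth_def by (simp add: sum_subtractf)

lemma orth_top_zero:
  assumes "finite V" "orth V k (Suc k) h" "R \<in> ksubsets V k"
  shows "h R = 0"
proof -
  have R: "R \<subseteq> V" "card R = k" using assms(3) by (auto simp: ksubsets_def)
  have "{R'\<in>ksubsets V k. R \<subseteq> R'} = {R}"
  proof
    show "{R'\<in>ksubsets V k. R \<subseteq> R'} \<subseteq> {R}"
    proof
      fix R' assume "R' \<in> {R'\<in>ksubsets V k. R \<subseteq> R'}"
      then have "R' \<subseteq> V" "card R' = k" "R \<subseteq> R'" by (auto simp: ksubsets_def)
      moreover have "finite R'" using \<open>R' \<subseteq> V\<close> assms(1) finite_subset by blast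
      ultimately have "R = R'" using R card_subset_eq by metis
      then show "R' \<in> {R}" by simp
    qed
    show "{R} \<subseteq> {R'\<in>ksubsets V k. R \<subseteq> R'}" using assms(3) by simp
  qed
  moreover have "(\<Sum>R'\<in>{R'\<in>ksubsets V k. R \<subseteq> R'}. h R') = 0"
    using assms(2) R unfolding orth_def by simp
  ultimately show ?thesis by simp
qed

lemma key:
  assumes "finite V" "2*k \<le> card V" "l \<le> Suc k" "orth V k l h"
  shows "avg (ksubsets V k) (\<lambda>R. (h R)\<^sup>2) \<le> (\<Sum>r\<in>{l..k}. 2^r * real (k choose r) * W2 V k r h)"
  using assms(3,4)
proof (induction l arbitrary: h rule: inc_induct)
  case base
  have "\<forall>R\<in>ksubsets V k. h R = 0" using orth_top_zero[OF assms(1) base] by blast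
  then show ?case by (simp add: avg_def)
next
  case (step n)
  obtain v where v: "inU V k (Suc n) v" and h': "orth V k (Suc n) (\<lambda>R. h R - v R)"
    using proj_orth[OF assms(1)] by blast
  define h' where "h' = (\<lambda>R. h R - v R)"
  have oh': "orth V k (Suc n) h'" using h' by (simp add: h'_def)
  have ov: "orth V k n v"
  proof -
    have "orth V k n (\<lambda>R. h R - h' R)" by (rule orth_diff[OF step.prems orth_mono[OF oh']]) simp
    then show ?thesis by (simp add: h'_def)
  qed
  have nk: "n \<le> k" using step.hyps by simp
  have pv: "avg (ksubsets V k) (\<lambda>R. (v R)\<^sup>2) \<le> 2^n * real (k choose n) * W2 V k n v"
    by (rule pure[OF assms(1) nk assms(2) ov v])
  have hsplit1: "h = (\<lambda>R. h' R + v R)" by (simp add: h'_def)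
  have hsplit2: "h = (\<lambda>R. v R + h' R)" by (simp add: h'_def)
  have Wn: "W2 V k n h = W2 V k n v"
    unfolding hsplit1 by (rule W2_add_zero) (use Dv_zero_orth[OF assms(1) nk _ oh'] in blast)
  have Wr: "W2 V k r h = W2 V k r h'" if "r \<in> {Suc n..k}" for r
    unfolding hsplit2 by (rule W2_add_zero) (use that Dv_zero_inU[OF assms(1) _ _ _ v] in auto)
  have IH: "avg (ksubsets V k) (\<lambda>R. (h' R)\<^sup>2) \<le> (\<Sum>r\<in>{Suc n..k}. 2^r * real (k choose r) * W2 V k r h')"
    by (rule step.IH[OF oh'])
  have ip0: "(\<Sum>R\<in>ksubsets V k. h' R * v R) = 0"
    using v oh' unfolding inU_def ip_def by blast
  have "avg (ksubsets V k) (\<lambda>R. (h R)\<^sup>2) = avg (ksubsets V k) (\<lambda>R. (v R)\<^sup>2) + avg (ksubsets V k) (\<lambda>R. (h' R)\<^sup>2)"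
  proof -
    have "(\<Sum>R\<in>ksubsets V k. (h R)\<^sup>2) = (\<Sum>R\<in>ksubsets V k. (v R)\<^sup>2 + (h' R)\<^sup>2 + 2 * (h' R * v R))"
      by (rule sum.cong[OF refl]) (simp add: hsplit1 power2_eq_square algebra_simps)
    also have "\<dots> = (\<Sum>R\<in>ksubsets V k. (v R)\<^sup>2) + (\<Sum>R\<in>ksubsets V k. (h' R)\<^sup>2)"
      using ip0 by (simp add: sum.distrib sum_distrib_left[symmetric])
    finally show ?thesis by (simp add: avg_def add_divide_distrib)
  qed
  also have "\<dots> \<le> 2^n * real (k choose n) * W2 V k n h + (\<Sum>r\<in>{Suc n..k}. 2^r * real (k choose r) * W2 V k r h)"
    using pv IH Wn Wr by (simp add: add_mono)
  also have "\<dots> = (\<Sum>r\<in>{n..k}. 2^r * real (k choose r) * W2 V k r h)"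
  proof -
    have "{n..k} = insert n {Suc n..k}" using nk by auto
    then show ?thesis by simp
  qed
  finally show ?case .
qed

theorem proposition2p6:
  fixes V :: "'a set" and k l :: nat and \<epsilon> :: real and f :: "'a set \<Rightarrow> real"
  assumes "finite V" and "card V \<ge> 2*k" and "k \<ge> l" and "\<epsilon> > 0"
    and "\<forall>r. l \<le> r \<and> r \<le> k \<longrightarrow> level_weight V k r f \<le> \<epsilon>"
  shows "\<exists>g :: 'a set \<Rightarrow> real.
           real (card {R \<in> ksubsets V k. \<bar>f R - g R\<bar> > sqrt \<epsilon>})
             \<le> 5 powr (real k / 2) * sqrt \<epsilon> * real (card V choose k)
         \<and> (\<forall>r. l \<le> r \<and> r \<le> k \<longrightarrow> level_weight V k r g = 0)"
proof -
  obtain g where gU: "inU V k l g" and oh0: "orth V k l (\<lambda>R. f R - g R)"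
    using proj_orth[OF assms(1)] by blast
  define h where "h = (\<lambda>R. f R - g R)"
  have oh: "orth V k l h" using oh0 by (simp add: h_def)
  have Dg: "\<forall>xs\<in>sperms V (2*r). Dv V k r xs g = 0" if "l \<le> r" "r \<le> k" for r
    using Dv_zero_inU[OF assms(1) that(2) that(1) _ gU] by blast
  have lw: "level_weight V k r g = 0" if "l \<le> r \<and> r \<le> k" for r
    unfolding level_weight_W2 using W2_zero[OF Dg] that by simp
  have fsplit: "f = (\<lambda>R. g R + h R)" by (simp add: h_def)
  have Wf: "W2 V k r h = W2 V k r f" if "l \<le> r" "r \<le> k" for r
    unfolding fsplit using W2_add_zero[OF Dg[OF that]] by simp
  have Wle: "W2 V k r f \<le> \<epsilon>\<^sup>2" if "l \<le> r" "r \<le> k" for r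
  proof -
    have "sqrt (W2 V k r f) \<le> \<epsilon>" using assms(5) that unfolding level_weight_W2 by blast
    then have "(sqrt (W2 V k r f))\<^sup>2 \<le> \<epsilon>\<^sup>2" by (intro power_mono) (auto simp: W2_nonneg)
    then show ?thesis using W2_nonneg[of V k r f] by simp
  qed
  define K where "K = ksubsets V k"
  define N where "N = real (card V choose k)"
  have fK: "finite K" unfolding K_def using assms(1) finite_ksubsets by blast
  have cK: "real (card K) = N" unfolding K_def N_def using card_ksubsets[OF assms(1)] by simp
  have "avg K (\<lambda>R. (h R)\<^sup>2) \<le> (\<Sum>r\<in>{l..k}. 2^r * real (k choose r) * W2 V k r h)"
    unfolding K_def by (rule key[OF assms(1) assms(2) _ oh]) (use assms(3) in simp)
  also have "\<dots> \<le> (\<Sum>r\<in>{l..k}. 2^r * real (k choose r) * \<epsilon>\<^sup>2)"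
    by (intro sum_mono mult_left_mono) (use Wf Wle in auto)
  also have "\<dots> \<le> (\<Sum>r\<in>{0..k}. 2^r * real (k choose r) * \<epsilon>\<^sup>2)"
    by (rule sum_mono2) auto
  also have "\<dots> = 3^k * \<epsilon>\<^sup>2"
  proof -
    have "(2 + 1 :: real)^k = (\<Sum>r\<le>k. real (k choose r) * 2^r * 1^(k-r))" by (rule binomial_ring)
    then have "(3::real)^k = (\<Sum>r\<in>{0..k}. 2^r * real (k choose r))" by (simp add: atMost_atLeast0 mult.commute)
    then show ?thesis by (simp add: sum_distrib_right)
  qed
  finally have avgh: "avg K (\<lambda>R. (h R)\<^sup>2) \<le> 3^k * \<epsilon>\<^sup>2" .
  define Bd where "Bd = {R \<in> K. \<bar>h R\<bar> > sqrt \<epsilon>}"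
  have BdK: "Bd \<subseteq> K" unfolding Bd_def by auto
  have cB1: "real (card Bd) \<le> N" using card_mono[OF fK BdK] cK by simp
  have "real (card Bd) * \<epsilon> = (\<Sum>R\<in>Bd. \<epsilon>)" by simp
  also have "\<dots> \<le> (\<Sum>R\<in>Bd. (h R)\<^sup>2)"
  proof (rule sum_mono)
    fix R assume "R \<in> Bd"
    then have "sqrt \<epsilon> < \<bar>h R\<bar>" unfolding Bd_def by simp
    then have "(sqrt \<epsilon>)\<^sup>2 \<le> \<bar>h R\<bar>\<^sup>2" using assms(4) by (intro power_mono) auto
    then show "\<epsilon> \<le> (h R)\<^sup>2" using assms(4) by simp
  qed
  also have "\<dots> \<le> (\<Sum>R\<in>K. (h R)\<^sup>2)" by (rule sum_mono2[OF fK BdK]) auto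
  also have "\<dots> = N * avg K (\<lambda>R. (h R)\<^sup>2)" using sum_card_avg[OF fK] cK by simp
  also have "\<dots> \<le> N * (3^k * \<epsilon>\<^sup>2)" using avgh cK by (intro mult_left_mono) auto
  finally have cB2: "real (card Bd) \<le> N * 3^k * \<epsilon>"
    using assms(4) by (simp add: power2_eq_square mult.assoc)
  define q where "q = (5::real) powr (real k / 2)"
  define s where "s = sqrt \<epsilon>"
  have q0: "q > 0" unfolding q_def by simp
  have qq: "q * q = 5^k"
  proof -
    have "q * q = 5 powr (real k / 2 + real k / 2)" unfolding q_def by (rule powr_add[symmetric])
    also have "\<dots> = 5 powr (real k)" by simp
    also have "\<dots> = 5^k" by (simp add: powr_realpow)
    finally show ?thesis .
  qed
  have s0: "s > 0" unfolding s_def using assms(4) by simp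
  have ss: "s * s = \<epsilon>" unfolding s_def using assms(4) by simp
  have N0: "N \<ge> 0" unfolding N_def by simp
  have "real (card Bd) \<le> q * s * N"
  proof (cases "q * s \<ge> 1")
    case True
    then have "N \<le> q * s * N" using N0 by (simp add: mult_le_cancel_right1)
    then show ?thesis using cB1 by simp
  next
    case False
    have "3^k * s * q \<le> (3::real)^k" using False by (simp add: mult.assoc mult_left_le mult.commute)
    also have "(3::real)^k \<le> 5^k" by (rule power_mono) auto
    finally have "3^k * s * q \<le> q * q" using qq by simp
    then have "3^k * s \<le> q" using q0 by (simp add: mult_le_cancel_right)
    then have "3^k * s * s \<le> q * s" using s0 by (simp add: mult_right_mono)
    then have "N * 3^k * \<epsilon> \<le> q * s * N" using N0 ss
      by (metis (no_types, lifting) mult.commute mult.left_commute mult_left_mono)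
    then show ?thesis using cB2 by simp
  qed
  then have "real (card {R \<in> ksubsets V k. \<bar>f R - g R\<bar> > sqrt \<epsilon>})
             \<le> 5 powr (real k / 2) * sqrt \<epsilon> * real (card V choose k)"
    by (simp add: Bd_def K_def h_def q_def s_def N_def)
  then show ?thesis using lw by blast
qed

end
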